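(* Let $\varphi=\frac{1+\sqrt5}{2}$ and $\varkappa_1=4$. (i) Let $x=[a_1,a_2,\ldots,a_t,\ldots]\in(0,1)$ be irrational and suppose $$\limsup_{t\to\infty}\frac{S^{\varphi}_{2t}(x)}{t}<\varkappa_1 .$$ Then the derivative $g'_{\varphi^{-1}}(x)$ exists and equals $+\infty$. (ii) For every $\delta>0$ there exists an irrational $y=[b_1,\ldots,b_t,\ldots]\in(0,1)$ such that the limit $\lim_{t\to\infty}\frac{S^{\varphi}_{2t}(y)}{t}$ exists, satisfies $$\lim_{t\to\infty}\frac{S^{\varphi}_{2t}(y)}{t}<\varkappa_1+\delta,$$ and $g'_{\varphi^{-1}}(y)=0$.
   Context: For irrational $x\in(0,1)$ write $x=[a_1,a_2,\ldots]=[0;a_1,a_2,\ldots]$ for its regular continued fraction expansion with partial quotients $a_i\ge 1$. Define $S^{\varphi}_t(x)=\sum_{i=1}^t a_i\left(\frac32+\frac12(-1)^i\right)=a_1+2a_2+a_3+2a_4+\cdots$ (the first $t$ terms). For $\lambda\in(0,1)$ the Denjoy–Tichy–Uitz function $g_\lambda:[0,1]\to[0,1]$ is defined by $g_\lambda(0/1)=0$, $g_\lambda(1/1)=1$, and, whenever $g_\lambda$ is already defined at two consecutive Farey fractions $\frac pq<\frac rs$ (with no value yet defined strictly between them), $g_\lambda\!\left(\frac{p+r}{q+s}\right)=(1-\lambda)g_\lambda\!\left(\frac pq\right)+\lambda g_\lambda\!\left(\frac rs\right)$; it is extended to irrationals by continuity. It is continuous and strictly increasing. For $\lambda=\varphi^{-1}$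 one has, for irrational $x$, $g_{\varphi^{-1}}(x)=\sum_{i\ge1}(-1)^{i-1}\varphi^{-(S^{\varphi}_i(x)-1)}$. The derivative $g'(x)$ is the two-sided limit of $(g(x+\delta)-g(x))/\delta$ as $\delta\to0$, allowed to equal $+\infty$. *)

theory Defs
  imports "HOL-Analysis.Analysis"
begin

definition golden :: real where "golden = (1 + sqrt 5) / 2"

definition gauss_map :: "real \<Rightarrow> real" where
  "gauss_map x = 1 / x - of_int \<lfloor>1 / x\<rfloor>"

definition cf_quot :: "real \<Rightarrow> nat \<Rightarrow> nat" where
  "cf_quot x i = nat \<lfloor>1 / ((gauss_map ^^ (i - 1)) x)\<rfloor>"
  \<comment> \<open>the i-th partial quotient a_i, for i \<ge> 1\<close>

definition S_phi :: "nat \<Rightarrow> real \<Rightarrow> real" where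
  "S_phi t x = (\<Sum>i=1..t. real (cf_quot x i) * (3/2 + (1/2) * (-1) ^ i))"

definition farey_nbrs :: "nat \<Rightarrow> nat \<Rightarrow> nat \<Rightarrow> nat \<Rightarrow> bool" where
  "farey_nbrs p q r s \<longleftrightarrow> q > 0 \<and> s > 0 \<and> r \<le> s \<and> r * q = p * s + 1"

text \<open>Denjoy--Tichy--Uitz function g_lambda: the continuous function on [0,1] with
  g(0)=0, g(1)=1 and g((p+r)/(q+s)) = (1-lambda) g(p/q) + lambda g(r/s) for consecutive
  Farey fractions p/q < r/s (every Farey-neighbour pair in [0,1] occurs as a consecutive
  pair in the construction). Outside [0,1] it is set to 0 (irrelevant).\<close>
definition DTU :: "real \<Rightarrow> real \<Rightarrow> real" where
  "DTU lam = (THE g. continuous_on {0..1} g \<and> g 0 = 0 \<and> g 1 = 1 \<and>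
      (\<forall>p q r s. farey_nbrs p q r s \<longrightarrow>
          g (real (p + r) / real (q + s)) = (1 - lam) * g (real p / real q) + lam * g (real r / real s)) \<and>
      (\<forall>x. x \<notin> {0..1} \<longrightarrow> g x = 0))"

end

theory Submission
  imports Defs
begin

section \<open>Golden ratio facts\<close>

definition mu :: real where "mu = 1 / golden"

lemma golden_sq: "golden^2 = golden + 1"
  unfolding golden_def by (simp add: power2_eq_square field_simps)

lemma golden_gt1: "golden > 1"
proof -
  have "sqrt 5 > 1" by (simp add: real_less_rsqrt)
  thus ?thesis unfolding golden_def by simp
qed

lemma golden_lt2: "golden < 2"
proof -
  have "sqrt 5 < 3" by (simp add: real_sqrt_less_iff real_less_lsqrt)
  thus ?thesis unfolding golden_def by simp
qed

lemma mu_pos: "mu > 0" using golden_gt1 by (simp add: mu_def)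
lemma mu_lt1: "mu < 1" using golden_gt1 by (simp add: mu_def)
lemma mu_sq: "mu^2 = 1 - mu"
proof -
  have g: "golden \<noteq> 0" using golden_gt1 by simp
  have "mu^2 * golden^2 = 1" unfolding mu_def using g by (simp add: field_simps)
  hence a: "mu^2 * golden + mu^2 = 1" by (simp add: golden_sq distrib_left)
  have gm: "mu * golden = 1" unfolding mu_def using g by simp
  have "mu^2 * golden = mu * (mu * golden)" by (simp only: power2_eq_square mult.assoc)
  also have "\<dots> = mu" using gm by simp
  finally have "mu^2 * golden = mu" .
  thus ?thesis using a by linarith
qed
lemma mu_plus_sq: "mu + mu^2 = 1" using mu_sq by simp
lemma mu_golden: "mu * golden = 1" using golden_gt1 by (simp add: mu_def)
lemma one_minus_lam: "1 - 1/golden = mu^2" using mu_sq by (simp add: mu_def)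

section \<open>Stern--Brocot nodes\<close>

type_synonym node = "nat \<times> nat \<times> nat \<times> nat"

definition root :: node where "root = (0,1,1,1)"
fun lch :: "node \<Rightarrow> node" where "lch (p,q,r,s) = (p,q,p+r,q+s)"
fun rch :: "node \<Rightarrow> node" where "rch (p,q,r,s) = (p+r,q+s,r,s)"
definition stp :: "bool \<Rightarrow> node \<Rightarrow> node" where "stp c n = (if c then rch n else lch n)"
fun lft :: "node \<Rightarrow> real" where "lft (p,q,r,s) = real p / real q"
fun rgt :: "node \<Rightarrow> real" where "rgt (p,q,r,s) = real r / real s"
fun med :: "node \<Rightarrow> real" where "med (p,q,r,s) = real (p + r) / real (q + s)"
fun dq :: "node \<Rightarrow> nat" where "dq (p,q,r,s) = q"
fun ds :: "node \<Rightarrow> nat" where "ds (p,q,r,s) = s"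
fun valid :: "node \<Rightarrow> bool" where
  "valid (p,q,r,s) \<longleftrightarrow> q > 0 \<and> s > 0 \<and> r \<le> s \<and> r * q = p * s + 1"

lemma valid_root: "valid root" by (simp add: root_def)

lemma valid_lch: "valid n \<Longrightarrow> valid (lch n)"
proof (cases n)
  case (fields p q r s)
  assume v: "valid n"
  then have h: "q > 0" "s > 0" "r \<le> s" "r * q = p * s + 1" using fields by auto
  have "p < q"
  proof (rule ccontr)
    assume "\<not> p < q" hence "q \<le> p" by simp
    hence a: "q * s \<le> p * s" by simp
    have b: "r * q \<le> s * q" using h(3) by simp
    have "s * q = q * s" by (simp add: mult.commute)
    with a b h(4) show False by linarith
  qed
  have "(p + r) * q = p * (q + s) + 1" using h(4) by (simp add: algebra_simps)
  thus ?thesis using fields h \<open>p < q\<close> by simp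
qed

lemma valid_rch: "valid n \<Longrightarrow> valid (rch n)"
proof (cases n)
  case (fields p q r s)
  assume v: "valid n"
  then have h: "q > 0" "s > 0" "r \<le> s" "r * q = p * s + 1" using fields by auto
  have "r * (q + s) = (p + r) * s + 1" using h(4) by (simp add: algebra_simps)
  thus ?thesis using fields h by simp
qed

lemma valid_stp: "valid n \<Longrightarrow> valid (stp c n)"
  by (simp add: stp_def valid_lch valid_rch)

lemma valid_real:
  assumes "valid (p,q,r,s)"
  shows "real r * real q = real p * real s + 1" "real q > 0" "real s > 0"
proof -
  have "r * q = p * s + 1" using assms by simp
  hence "real (r * q) = real (p * s + 1)" by simp
  thus "real r * real q = real p * real s + 1" by simp
  show "real q > 0" "real s > 0" using assms by auto
qed

lemma len_node:
  assumes "valid n" shows "rgt n - lft n = 1 / (real (dq n) * real (ds n))"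
proof (cases n)
  case (fields p q r s)
  from valid_real[of p q r s] assms fields
  have e: "real r * real q = real p * real s + 1" "real q > 0" "real s > 0" by auto
  have "real r / real s - real p / real q = (real r * real q - real p * real s) / (real q * real s)"
    using e by (simp add: field_simps)
  thus ?thesis using fields e by simp
qed

lemma med_minus_lft:
  assumes "valid n" shows "med n - lft n = 1 / (real (dq n) * (real (dq n) + real (ds n)))"
proof (cases n)
  case (fields p q r s)
  from valid_real[of p q r s] assms fields
  have e: "real r * real q = real p * real s + 1" "real q > 0" "real s > 0" by auto
  have "(real p + real r) / (real q + real s) - real p / real q
        = ((real p + real r) * real q - real p * (real q + real s)) / (real q * (real q + real s))"
    using e by (simp add: field_simps)
  also have "\<dots> = 1 / (real q * (real q + real s))" using e by (simp add: algebra_simps)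
  finally show ?thesis using fields by simp
qed

lemma rgt_minus_med:
  assumes "valid n" shows "rgt n - med n = 1 / ((real (dq n) + real (ds n)) * real (ds n))"
proof (cases n)
  case (fields p q r s)
  from valid_real[of p q r s] assms fields
  have e: "real r * real q = real p * real s + 1" "real q > 0" "real s > 0" by auto
  have "real r / real s - (real p + real r) / (real q + real s)
        = (real r * (real q + real s) - (real p + real r) * real s) / ((real q + real s) * real s)"
    using e by (simp add: field_simps)
  also have "\<dots> = 1 / ((real q + real s) * real s)" using e by (simp add: algebra_simps)
  finally show ?thesis using fields by simp
qed

lemma dq_pos: "valid n \<Longrightarrow> dq n > 0" by (cases n) auto
lemma ds_pos: "valid n \<Longrightarrow> ds n > 0" by (cases n) auto

lemma lft_lt_med: "valid n \<Longrightarrow> lft n < med n"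
proof -
  assume v: "valid n"
  have "1 / (real (dq n) * (real (dq n) + real (ds n))) > 0"
    using dq_pos[OF v] ds_pos[OF v] by (intro divide_pos_pos) auto
  thus ?thesis using med_minus_lft[OF v] by linarith
qed
lemma med_lt_rgt: "valid n \<Longrightarrow> med n < rgt n"
proof -
  assume v: "valid n"
  have "1 / ((real (dq n) + real (ds n)) * real (ds n)) > 0"
    using dq_pos[OF v] ds_pos[OF v] by (intro divide_pos_pos) auto
  thus ?thesis using rgt_minus_med[OF v] by linarith
qed
lemma lft_lt_rgt: "valid n \<Longrightarrow> lft n < rgt n"
  using lft_lt_med[of n] med_lt_rgt[of n] by linarith

lemma lft_lch[simp]: "lft (lch n) = lft n" by (cases n) auto
lemma rgt_lch[simp]: "rgt (lch n) = med n" by (cases n) auto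
lemma lft_rch[simp]: "lft (rch n) = med n" by (cases n) auto
lemma rgt_rch[simp]: "rgt (rch n) = rgt n" by (cases n) auto
lemma dq_lch[simp]: "dq (lch n) = dq n" by (cases n) auto
lemma ds_lch[simp]: "ds (lch n) = dq n + ds n" by (cases n) auto
lemma dq_rch[simp]: "dq (rch n) = dq n + ds n" by (cases n) auto
lemma ds_rch[simp]: "ds (rch n) = ds n" by (cases n) auto

lemma lft_root[simp]: "lft root = 0" and rgt_root[simp]: "rgt root = 1"
  and dq_root[simp]: "dq root = 1" and ds_root[simp]: "ds root = 1"
  by (auto simp: root_def)

definition nodeW :: "bool list \<Rightarrow> node" where
  "nodeW W = foldl (\<lambda>n c. stp c n) root W"

lemma nodeW_Nil[simp]: "nodeW [] = root" by (simp add: nodeW_def)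
lemma nodeW_snoc[simp]: "nodeW (W @ [c]) = stp c (nodeW W)" by (simp add: nodeW_def)

lemma valid_nodeW: "valid (nodeW W)"
  by (induction W rule: rev_induct) (auto simp: valid_root valid_stp)

definition wW :: "bool list \<Rightarrow> real" where
  "wW W = mu ^ (length W + length (filter id W))"

definition lvW :: "bool list \<Rightarrow> real" where
  "lvW W = (\<Sum>i<length W. if W ! i then mu * wW (take i W) else 0)"

lemma wW_Nil[simp]: "wW [] = 1" by (simp add: wW_def)
lemma lvW_Nil[simp]: "lvW [] = 0" by (simp add: lvW_def)

lemma wW_snoc[simp]: "wW (W @ [c]) = (if c then mu^2 else mu) * wW W"
  by (simp add: wW_def power_add[symmetric] power2_eq_square)

lemma lvW_snoc[simp]: "lvW (W @ [c]) = lvW W + (if c then mu * wW W else 0)"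
proof -
  have "lvW (W @ [c]) = (\<Sum>i<Suc (length W). if (W @ [c]) ! i then mu * wW (take i (W @ [c])) else 0)"
    by (simp add: lvW_def)
  also have "\<dots> = (\<Sum>i<length W. if (W @ [c]) ! i then mu * wW (take i (W @ [c])) else 0)
                 + (if c then mu * wW W else 0)"
    by simp
  also have "(\<Sum>i<length W. if (W @ [c]) ! i then mu * wW (take i (W @ [c])) else 0) = lvW W"
    unfolding lvW_def by (intro sum.cong) (auto simp: nth_append)
  finally show ?thesis .
qed

lemma wW_pos: "wW W > 0" using mu_pos by (simp add: wW_def)
lemma wW_le: "wW W \<le> mu ^ length W"
  using mu_pos mu_lt1 by (simp add: wW_def power_decreasing)

lemma lvW_mono_aux:
  "lvW V \<le> lvW (V @ U) \<and> lvW (V @ U) + wW (V @ U) \<le> lvW V + wW V"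
proof (induction U rule: rev_induct)
  case Nil then show ?case by simp
next
  case (snoc c U)
  have w: "wW (V @ U) > 0" by (rule wW_pos)
  show ?case
  proof (cases c)
    case True
    have e1: "lvW (V @ U @ [c]) = lvW (V @ U) + mu * wW (V @ U)"
      using True lvW_snoc[of "V @ U" c] by simp
    have e2: "wW (V @ U @ [c]) = mu^2 * wW (V @ U)"
      using True wW_snoc[of "V @ U" c] by simp
    have "lvW (V @ U @ [c]) + wW (V @ U @ [c]) = lvW (V @ U) + wW (V @ U) * (mu + mu^2)"
      using e1 e2 by (simp add: algebra_simps)
    also have "\<dots> = lvW (V @ U) + wW (V @ U)" using mu_plus_sq by simp
    finally have f: "lvW (V @ U @ [c]) + wW (V @ U @ [c]) = lvW (V @ U) + wW (V @ U)" .
    have "mu * wW (V @ U) \<ge> 0" using mu_pos w by simp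
    hence "lvW (V @ U) \<le> lvW (V @ U @ [c])" using e1 by linarith
    thus ?thesis using snoc f by (metis append_assoc order_trans)
  next
    case False
    have "mu * wW (V @ U) \<le> wW (V @ U)" using mu_lt1 w by simp
    have e1: "lvW (V @ U @ [c]) = lvW (V @ U)"
      using False lvW_snoc[of "V @ U" c] by simp
    have e2: "wW (V @ U @ [c]) = mu * wW (V @ U)"
      using False wW_snoc[of "V @ U" c] by simp
    show ?thesis using snoc e1 e2 \<open>mu * wW (V @ U) \<le> wW (V @ U)\<close> by auto
  qed
qed

lemma lvW_bounds: "0 \<le> lvW W \<and> lvW W + wW W \<le> 1"
  using lvW_mono_aux[of "[]" W] by simp


lemma replicate_snoc: "replicate (Suc n) x = replicate n x @ [x]"
  by (induction n) auto

lemma stp_sub: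
  assumes "valid n"
  shows "lft n \<le> lft (stp c n) \<and> rgt (stp c n) \<le> rgt n"
  using lft_lt_med[OF assms] med_lt_rgt[OF assms] by (auto simp: stp_def)

definition goR :: "bool \<Rightarrow> real \<Rightarrow> node \<Rightarrow> bool" where
  "goR b u n = (if b then med n \<le> u else med n < u)"

fun chn :: "bool \<Rightarrow> real \<Rightarrow> nat \<Rightarrow> node" where
  "chn b u 0 = root"
| "chn b u (Suc k) = stp (goR b u (chn b u k)) (chn b u k)"

definition lt :: "bool \<Rightarrow> real \<Rightarrow> nat \<Rightarrow> bool" where
  "lt b u k = goR b u (chn b u k)"

definition word :: "bool \<Rightarrow> real \<Rightarrow> nat \<Rightarrow> bool list" where
  "word b u k = map (lt b u) [0..<k]"

lemma word_0[simp]: "word b u 0 = []" by (simp add: word_def)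
lemma word_Suc: "word b u (Suc k) = word b u k @ [lt b u k]" by (simp add: word_def)
lemma length_word[simp]: "length (word b u k) = k" by (simp add: word_def)
lemma take_word: "j \<le> k \<Longrightarrow> take j (word b u k) = word b u j"
  by (simp add: word_def take_map)
lemma nth_word: "i < k \<Longrightarrow> word b u k ! i = lt b u i"
  by (simp add: word_def)

lemma chn_word: "chn b u k = nodeW (word b u k)"
  by (induction k) (auto simp: word_Suc lt_def)

lemma valid_chn: "valid (chn b u k)"
  by (simp add: chn_word valid_nodeW)

lemma chn_inv_True:
  assumes "0 \<le> u" "u < 1"
  shows "lft (chn True u k) \<le> u \<and> u < rgt (chn True u k)"
proof (induction k)
  case 0 then show ?case using assms by (simp)
next
  case (Suc k) then show ?case by (auto simp: stp_def goR_def)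
qed

lemma chn_inv_False:
  assumes "0 < u" "u \<le> 1"
  shows "lft (chn False u k) < u \<and> u \<le> rgt (chn False u k)"
proof (induction k)
  case 0 then show ?case using assms by (simp)
next
  case (Suc k) then show ?case by (auto simp: stp_def goR_def)
qed

lemma reach_True:
  "lft (nodeW W) \<le> u \<Longrightarrow> u < rgt (nodeW W) \<Longrightarrow> word True u (length W) = W"
proof (induction W rule: rev_induct)
  case Nil then show ?case by simp
next
  case (snoc c W)
  have v: "valid (nodeW W)" by (rule valid_nodeW)
  have s: "lft (nodeW W) \<le> lft (stp c (nodeW W)) \<and> rgt (stp c (nodeW W)) \<le> rgt (nodeW W)"
    by (rule stp_sub[OF v])
  have IH: "word True u (length W) = W" using snoc s by auto
  have "lt True u (length W) = c"
    using snoc.prems IH by (cases c) (auto simp: lt_def chn_word goR_def stp_def)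
  thus ?case using IH by (simp add: word_Suc)
qed

lemma reach_False:
  "lft (nodeW W) < u \<Longrightarrow> u \<le> rgt (nodeW W) \<Longrightarrow> word False u (length W) = W"
proof (induction W rule: rev_induct)
  case Nil then show ?case by simp
next
  case (snoc c W)
  have v: "valid (nodeW W)" by (rule valid_nodeW)
  have s: "lft (nodeW W) \<le> lft (stp c (nodeW W)) \<and> rgt (stp c (nodeW W)) \<le> rgt (nodeW W)"
    by (rule stp_sub[OF v])
  have IH: "word False u (length W) = W" using snoc s by auto
  have "lt False u (length W) = c"
    using snoc.prems IH by (cases c) (auto simp: lt_def chn_word goR_def stp_def)
  thus ?case using IH by (simp add: word_Suc)
qed

section \<open>The function G\<close>

definition G :: "real \<Rightarrow> real" where
  "G u = (SUP k. lvW (word True u k))"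

lemma bdd_lv: "bdd_above (range (\<lambda>k. lvW (word b u k)))"
  using lvW_bounds wW_pos by (intro bdd_aboveI[of _ 1]) (auto, smt (verit))

lemma lv_le_G: "lvW (word True u k) \<le> G u"
  unfolding G_def by (rule cSUP_upper[OF UNIV_I bdd_lv])

lemma lv_prefix:
  assumes "j \<le> k"
  shows "lvW (word b u j) \<le> lvW (word b u k) \<and>
         lvW (word b u k) + wW (word b u k) \<le> lvW (word b u j) + wW (word b u j)"
proof -
  have "word b u k = take j (word b u k) @ drop j (word b u k)" by simp
  hence "word b u k = word b u j @ drop j (word b u k)" using take_word[OF assms] by simp
  thus ?thesis using lvW_mono_aux[of "word b u j" "drop j (word b u k)"] by simp
qed

lemma G_bounds:
  assumes "lft (nodeW W) \<le> u" "u < rgt (nodeW W)"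
  shows "lvW W \<le> G u \<and> G u \<le> lvW W + wW W"
proof -
  have R: "word True u (length W) = W" by (rule reach_True[OF assms])
  have "lvW W \<le> G u" using lv_le_G[of u "length W"] R by simp
  moreover have "G u \<le> lvW W + wW W"
    unfolding G_def
  proof (rule cSUP_least)
    fix k
    let ?K = "max k (length W)"
    have a: "lvW (word True u k) \<le> lvW (word True u ?K)" using lv_prefix[of k ?K] by simp
    have b: "lvW (word True u ?K) + wW (word True u ?K) \<le> lvW W + wW W"
      using lv_prefix[of "length W" ?K True u] R by simp
    show "lvW (word True u k) \<le> lvW W + wW W" using a b wW_pos[of "word True u ?K"] by linarith
  qed simp
  ultimately show ?thesis by simp
qed

lemma nodeW_L_rep: "lft (nodeW (W @ replicate j False)) = lft (nodeW W) \<and>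
   lvW (W @ replicate j False) = lvW W \<and> wW (W @ replicate j False) = mu ^ j * wW W"
proof (induction j)
  case 0 then show ?case by simp
next
  case (Suc j)
  have e: "W @ replicate (Suc j) False = (W @ replicate j False) @ [False]"
    by (metis append_assoc replicate_snoc)
  have a: "lft (nodeW ((W @ replicate j False) @ [False])) = lft (nodeW (W @ replicate j False))"
    by (simp only: nodeW_snoc) (simp add: stp_def)
  have b: "lvW ((W @ replicate j False) @ [False]) = lvW (W @ replicate j False)"
    by (simp only: lvW_snoc) simp
  have c: "wW ((W @ replicate j False) @ [False]) = mu * wW (W @ replicate j False)"
    by (simp only: wW_snoc) simp
  show ?case unfolding e using Suc a b c by simp
qed

lemma G_lft: "G (lft (nodeW W)) = lvW W"
proof -
  let ?u = "lft (nodeW W)"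
  have v: "valid (nodeW W)" by (rule valid_nodeW)
  have b: "lvW W \<le> G ?u" using G_bounds[of W ?u] lft_lt_rgt[OF v] by simp
  have "\<forall>j. G ?u \<le> lvW W + mu ^ j * wW W"
  proof
    fix j
    let ?V = "W @ replicate j False"
    have "valid (nodeW ?V)" by (rule valid_nodeW)
    hence "lft (nodeW ?V) < rgt (nodeW ?V)" by (rule lft_lt_rgt)
    hence "G ?u \<le> lvW ?V + wW ?V" using G_bounds[of ?V ?u] nodeW_L_rep[of W j] by simp
    thus "G ?u \<le> lvW W + mu ^ j * wW W" using nodeW_L_rep[of W j] by simp
  qed
  moreover have "(\<lambda>j. lvW W + mu ^ j * wW W) \<longlonglongrightarrow> lvW W + 0 * wW W"
    using mu_pos mu_lt1 by (intro tendsto_intros LIMSEQ_power_zero) auto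
  ultimately have "G ?u \<le> lvW W" using LIMSEQ_le_const[of _ "lvW W" "G ?u"] by auto
  thus ?thesis using b by simp
qed

lemma rgt_rep_True: "rgt (nodeW (replicate k True)) = 1"
  by (induction k) (simp, simp only: replicate_snoc nodeW_snoc, simp add: stp_def)

lemma word_one: "word True 1 k = replicate k True"
proof (induction k)
  case 0 then show ?case by simp
next
  case (Suc k)
  have "rgt (chn True 1 k) = 1"
    using Suc by (simp add: chn_word rgt_rep_True del: replicate.simps)
  hence "med (chn True 1 k) < 1" using med_lt_rgt[OF valid_chn[of True 1 k]] by simp
  hence "lt True 1 k" by (simp add: lt_def goR_def)
  thus ?case using Suc by (simp add: word_Suc replicate_snoc del: replicate.simps)
qed

lemma lv_rep_True: "lvW (replicate k True) = 1 - mu ^ (2 * k)"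
proof (induction k)
  case 0 then show ?case by simp
next
  case (Suc k)
  have w: "wW (replicate k True) = mu ^ (2 * k)" by (simp add: wW_def mult_2)
  have "lvW (replicate (Suc k) True) = 1 - mu ^ (2 * k) + mu * mu ^ (2 * k)"
    using Suc w by (simp only: replicate_snoc lvW_snoc) simp
  also have "\<dots> = 1 - mu ^ (2 * k) * (1 - mu)" by (simp add: algebra_simps)
  also have "\<dots> = 1 - mu ^ (2 * Suc k)"
  proof -
    have "mu ^ (2 * Suc k) = mu ^ (2 * k) * mu^2" by (simp add: power_add power2_eq_square)
    thus ?thesis by (simp only: mu_sq)
  qed
  finally show ?case .
qed

lemma G_one: "G 1 = 1"
proof -
  have up: "G 1 \<le> 1" unfolding G_def
    using lvW_bounds wW_pos by (intro cSUP_least) (auto, smt (verit))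
  have "\<forall>k. 1 - mu ^ (2 * k) \<le> G 1" using lv_le_G[of 1] by (simp add: word_one lv_rep_True)
  moreover have "(\<lambda>k. 1 - mu ^ (2 * k)) \<longlonglongrightarrow> 1 - 0"
  proof -
    have m2: "0 < mu^2" "mu^2 < 1" using mu_pos mu_lt1 mu_sq by auto
    have "(\<lambda>k. (mu^2) ^ k) \<longlonglongrightarrow> 0" using m2
      by (intro LIMSEQ_power_zero) simp
    thus ?thesis by (intro tendsto_intros) (simp add: power_mult)
  qed
  ultimately have "1 \<le> G 1" using LIMSEQ_le_const2[of _ 1 "G 1"] by auto
  thus ?thesis using up by simp
qed

lemma G_rgt: "G (rgt (nodeW W)) = lvW W + wW W"
proof (induction W rule: rev_induct)
  case Nil then show ?case using G_one by simp
next
  case (snoc c W)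
  show ?case
  proof (cases c)
    case True
    have "lvW (W @ [c]) + wW (W @ [c]) = lvW W + wW W * (mu + mu^2)"
      using True by (simp add: algebra_simps)
    thus ?thesis using snoc True mu_plus_sq by (simp add: stp_def)
  next
    case False
    have "rgt (nodeW (W @ [c])) = lft (nodeW (W @ [True]))" using False by (simp add: stp_def)
    thus ?thesis using G_lft[of "W @ [True]"] False by simp
  qed
qed

lemma G_bounds2:
  assumes "lft (nodeW W) < u" "u \<le> rgt (nodeW W)"
  shows "lvW W \<le> G u \<and> G u \<le> lvW W + wW W"
proof (cases "u = rgt (nodeW W)")
  case True thus ?thesis using G_rgt[of W] wW_pos[of W] by simp
next
  case False thus ?thesis using G_bounds[of W u] assms by simp
qed

lemma G_mono:
  assumes "u \<le> v" shows "G u \<le> G v"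
proof -
  have claim: "\<forall>k. word True u k = word True v k \<or>
      lvW (word True u k) + wW (word True u k) \<le> lvW (word True v k)"
  proof
    fix k show "word True u k = word True v k \<or>
      lvW (word True u k) + wW (word True u k) \<le> lvW (word True v k)"
    proof (induction k)
      case 0 then show ?case by simp
    next
      case (Suc k)
      show ?case
      proof (cases "word True u k = word True v k")
        case eq: True
        hence cn: "chn True u k = chn True v k" by (simp add: chn_word)
        have mono: "lt True u k \<Longrightarrow> lt True v k"
          using assms cn by (auto simp: lt_def goR_def)
        show ?thesis
        proof (cases "lt True u k = lt True v k")
          case True thus ?thesis using eq by (simp add: word_Suc)
        next
          case False
          hence "\<not> lt True u k" "lt True v k" using mono by auto
          thus ?thesis using eq by (simp add: word_Suc)
        qed
      next
        case False
        hence h: "lvW (word True u k) + wW (word True u k) \<le> lvW (word True v k)" using Suc by simp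
        have a: "lvW (word True u (Suc k)) + wW (word True u (Suc k)) \<le> lvW (word True u k) + wW (word True u k)"
          using lv_prefix[of k "Suc k" True u] by simp
        have b: "lvW (word True v k) \<le> lvW (word True v (Suc k))"
          using lv_prefix[of k "Suc k" True v] by simp
        show ?thesis using h a b by linarith
      qed
    qed
  qed
  show ?thesis unfolding G_def
  proof (rule cSUP_least)
    fix k
    have "lvW (word True u k) \<le> lvW (word True v k)"
      using claim wW_pos[of "word True u k"] by (smt (verit))
    also have "\<dots> \<le> G v" by (rule lv_le_G)
    finally show "lvW (word True u k) \<le> (SUP k. lvW (word True v k))" by (simp add: G_def)
  qed simp
qed


lemma G_cont: "continuous_on {0..1} G"
  unfolding continuous_on_iff
proof (intro ballI allI impI)
  fix v e :: real
  assume v: "v \<in> {0..1}" and e: "e > 0"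
  obtain k where k: "mu ^ k < e" using real_arch_pow_inv[OF e mu_lt1] by blast
  define N1 where "N1 = word True v k"
  define N2 where "N2 = word False v k"
  have w1: "wW N1 < e" using wW_le[of N1] k by (simp add: N1_def)
  have w2: "wW N2 < e" using wW_le[of N2] k by (simp add: N2_def)
  define d1 where "d1 = (if v < 1 then rgt (nodeW N1) - v else 1)"
  define d2 where "d2 = (if 0 < v then v - lft (nodeW N2) else 1)"
  have i1: "v < 1 \<Longrightarrow> lft (nodeW N1) \<le> v \<and> v < rgt (nodeW N1)"
    using chn_inv_True[of v k] v by (simp add: N1_def chn_word)
  have i2: "0 < v \<Longrightarrow> lft (nodeW N2) < v \<and> v \<le> rgt (nodeW N2)"
    using chn_inv_False[of v k] v by (simp add: N2_def chn_word)
  have d1p: "d1 > 0" using i1 by (auto simp: d1_def)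
  have d2p: "d2 > 0" using i2 by (auto simp: d2_def)
  show "\<exists>d>0. \<forall>x'\<in>{0..1}. dist x' v < d \<longrightarrow> dist (G x') (G v) < e"
  proof (intro exI[of _ "min d1 d2"] conjI ballI impI)
    show "min d1 d2 > 0" using d1p d2p by simp
    fix x' assume x': "x' \<in> {0..1}" and dx: "dist x' v < min d1 d2"
    consider "x' = v" | "v < x'" | "x' < v" by linarith
    then show "dist (G x') (G v) < e"
    proof cases
      case 1 then show ?thesis using e by simp
    next
      case 2
      hence "v < 1" using x' by simp
      hence a: "lft (nodeW N1) \<le> v" "v < rgt (nodeW N1)" and "x' < rgt (nodeW N1)"
        using i1 dx by (auto simp: d1_def dist_real_def)
      hence "lvW N1 \<le> G x' \<and> G x' \<le> lvW N1 + wW N1" "lvW N1 \<le> G v \<and> G v \<le> lvW N1 + wW N1"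
        using G_bounds[of N1 x'] G_bounds[of N1 v] 2 by auto
      thus ?thesis using w1 by (auto simp: dist_real_def)
    next
      case 3
      hence "0 < v" using x' by simp
      hence a: "lft (nodeW N2) < v" "v \<le> rgt (nodeW N2)" and "lft (nodeW N2) < x'"
        using i2 dx by (auto simp: d2_def dist_real_def)
      hence "lvW N2 \<le> G x' \<and> G x' \<le> lvW N2 + wW N2" "lvW N2 \<le> G v \<and> G v \<le> lvW N2 + wW N2"
        using G_bounds2[of N2 x'] G_bounds2[of N2 v] 3 by auto
      thus ?thesis using w2 by (auto simp: dist_real_def)
    qed
  qed
qed

lemma valid_iff_farey: "valid (p,q,r,s) \<longleftrightarrow> farey_nbrs p q r s"
  by (auto simp: farey_nbrs_def)

lemma farey_node: "farey_nbrs p q r s \<Longrightarrow> \<exists>W. nodeW W = (p,q,r,s)"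
proof (induction "q+s" arbitrary: p q r s rule: less_induct)
  case less
  have h: "q > 0" "s > 0" "r \<le> s" "r * q = p * s + 1" using less.prems by (auto simp: farey_nbrs_def)
  have pq: "p < q"
  proof (rule ccontr)
    assume "\<not> p < q" hence "q \<le> p" by simp
    hence a: "q * s \<le> p * s" by simp
    have b: "r * q \<le> s * q" using h(3) by simp
    have "s * q = q * s" by (simp add: mult.commute)
    with a b h(4) show False by linarith
  qed
  consider "q < s" | "s < q" | "q = s" by linarith
  then show ?case
  proof cases
    case 1
    have rp: "p \<le> r"
    proof (rule ccontr)
      assume "\<not> p \<le> r" hence "r < p" by simp
      hence "r * q < p * q" using h(1) by simp
      moreover have "p * q \<le> p * s" using 1 by simp
      ultimately show False using h(4) by linarith
    qed
    have e1: "(r - p) * q = p * (s - q) + 1"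
    proof -
      have "(r - p) * q = r * q - p * q" by (simp add: diff_mult_distrib)
      also have "\<dots> = p * s + 1 - p * q" using h(4) by simp
      also have "\<dots> = p * (s - q) + 1"
      proof -
        have "p * q \<le> p * s" using 1 by simp
        thus ?thesis by (simp add: diff_mult_distrib2 Suc_diff_le)
      qed
      finally show ?thesis .
    qed
    have e2: "r - p \<le> s - q"
    proof -
      have "p \<le> q - 1" using pq by simp
      hence "p * (s - q) + 1 \<le> (q - 1) * (s - q) + 1" by simp
      also have "\<dots> \<le> q * (s - q)" using 1 h(1) by (cases q) auto
      finally have "(r - p) * q \<le> (s - q) * q" using e1 by (simp add: mult.commute)
      thus ?thesis using h(1) by simp
    qed
    have "farey_nbrs p q (r - p) (s - q)" using h 1 e1 e2 by (simp add: farey_nbrs_def)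
    moreover have "q + (s - q) < q + s" using h 1 by simp
    ultimately obtain W where "nodeW W = (p, q, r - p, s - q)" using less.hyps by blast
    hence "nodeW (W @ [False]) = (p, q, r, s)" using rp 1 by (simp add: stp_def)
    thus ?thesis by blast
  next
    case 2
    have rp: "r \<le> p"
    proof (rule ccontr)
      assume "\<not> r \<le> p" hence "p + 1 \<le> r" by simp
      hence "(p + 1) * q \<le> r * q" using mult_le_mono1 by blast
      moreover have "p * s \<le> p * q" using 2 by simp
      moreover have "(p + 1) * q = p * q + q" by simp
      ultimately show False using h(4) 2 h(2) by linarith
    qed
    have e1: "r * (q - s) = (p - r) * s + 1"
    proof -
      have "r * (q - s) = r * q - r * s" by (simp add: diff_mult_distrib2)
      also have "\<dots> = p * s + 1 - r * s" using h(4) by simp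
      also have "\<dots> = (p - r) * s + 1"
      proof -
        have "r * s \<le> p * s" using rp by simp
        thus ?thesis by (simp add: diff_mult_distrib Suc_diff_le)
      qed
      finally show ?thesis .
    qed
    have "farey_nbrs (p - r) (q - s) r s" using h 2 e1 by (simp add: farey_nbrs_def)
    moreover have "(q - s) + s < q + s" using h 2 by simp
    ultimately obtain W where "nodeW W = (p - r, q - s, r, s)" using less.hyps by blast
    hence "nodeW (W @ [True]) = (p, q, r, s)" using rp 2 by (simp add: stp_def)
    thus ?thesis by blast
  next
    case 3
    have "q * (r - p) = 1"
    proof -
      have "q * (r - p) = r * q - p * q" by (simp add: diff_mult_distrib2 mult.commute)
      thus ?thesis using h(4) 3 by (simp add: mult.commute)
    qed
    hence "q = 1" "r = p + 1" by (auto simp: mult_eq_1_iff)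
    hence "p = 0" "r = 1" "s = 1" using pq 3 by auto
    hence "nodeW [] = (p,q,r,s)" using \<open>q = 1\<close> by (simp add: root_def)
    thus ?thesis by blast
  qed
qed

lemma dens_len: "dq (nodeW W) + ds (nodeW W) \<ge> length W + 2"
proof (induction W rule: rev_induct)
  case Nil then show ?case by simp
next
  case (snoc c W)
  have "dq (nodeW W) > 0" "ds (nodeW W) > 0" using dq_pos ds_pos valid_nodeW by auto
  then show ?case using snoc by (cases c) (auto simp: stp_def)
qed

lemma node_len_bound: "rgt (nodeW W) - lft (nodeW W) \<le> 1 / (real (length W) + 1)"
proof -
  let ?q = "real (dq (nodeW W))" and ?s = "real (ds (nodeW W))"
  have v: "valid (nodeW W)" by (rule valid_nodeW)
  have q1: "?q \<ge> 1" and s1: "?s \<ge> 1" using dq_pos[OF v] ds_pos[OF v] by auto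
  have "(?q - 1) * (?s - 1) \<ge> 0" using q1 s1 by simp
  hence "?q * ?s \<ge> ?q + ?s - 1" by (simp add: algebra_simps)
  moreover have "?q + ?s \<ge> real (length W) + 2" using dens_len[of W] by linarith
  ultimately have "?q * ?s \<ge> real (length W) + 1" by linarith
  hence "1 / (?q * ?s) \<le> 1 / (real (length W) + 1)"
    by (intro divide_left_mono) auto
  thus ?thesis using len_node[OF v] by simp
qed

definition Gx :: "real \<Rightarrow> real" where
  "Gx x = (if x \<in> {0..1} then G x else 0)"

lemma node_in01: "0 \<le> lft (nodeW W) \<and> rgt (nodeW W) \<le> 1"
proof (induction W rule: rev_induct)
  case Nil then show ?case by simp
next
  case (snoc c W) then show ?case using stp_sub[OF valid_nodeW[of W], of c] by auto
qed

lemma G_med: "G (med (nodeW W)) = lvW W + mu * wW W"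
proof -
  have "med (nodeW W) = lft (nodeW (W @ [True]))" by (simp add: stp_def)
  thus ?thesis using G_lft[of "W @ [True]"] by simp
qed

lemma g_node:
  assumes g0: "g 0 = 0" and g1: "g 1 = 1"
    and fa: "\<forall>p q r s. farey_nbrs p q r s \<longrightarrow>
          g (real (p + r) / real (q + s)) = (1 - 1/golden) * g (real p / real q) + (1/golden) * g (real r / real s)"
  shows "g (lft (nodeW W)) = lvW W \<and> g (rgt (nodeW W)) = lvW W + wW W"
proof (induction W rule: rev_induct)
  case Nil then show ?case using g0 g1 by simp
next
  case (snoc c W)
  obtain p q r s where n: "nodeW W = (p,q,r,s)" by (cases "nodeW W") auto
  have "farey_nbrs p q r s" using valid_nodeW[of W] n valid_iff_farey by metis
  hence "g (med (nodeW W)) = mu^2 * g (lft (nodeW W)) + mu * g (rgt (nodeW W))"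
    using fa n by (simp add: one_minus_lam mu_def)
  hence gm: "g (med (nodeW W)) = lvW W + mu * wW W"
    using snoc mu_plus_sq by (simp add: algebra_simps) (metis add.commute distrib_left mult.commute mult_1)
  show ?case
  proof (cases c)
    case True
    have "lvW W + wW W = lvW W + mu * wW W + mu^2 * wW W" using mu_plus_sq by (simp add: algebra_simps)
      (metis distrib_left mult.commute mult_1)
    then show ?thesis using snoc gm True by (simp add: stp_def)
  next
    case False then show ?thesis using snoc gm by (simp add: stp_def)
  qed
qed

lemma DTU_eq: "DTU (1 / golden) = Gx"
  unfolding DTU_def
proof (rule the_equality)
  show "continuous_on {0..1} Gx \<and> Gx 0 = 0 \<and> Gx 1 = 1 \<and>
    (\<forall>p q r s. farey_nbrs p q r s \<longrightarrow>
        Gx (real (p + r) / real (q + s)) = (1 - 1 / golden) * Gx (real p / real q) + 1 / golden * Gx (real r / real s)) \<and>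
    (\<forall>x. x \<notin> {0..1} \<longrightarrow> Gx x = 0)"
  proof (intro conjI allI impI)
    show "continuous_on {0..1} Gx"
      using G_cont by (rule continuous_on_eq) (simp add: Gx_def)
    show "Gx 0 = 0" using G_lft[of "[]"] by (simp add: Gx_def)
    show "Gx 1 = 1" using G_one by (simp add: Gx_def)
    fix x :: real assume "x \<notin> {0..1}" thus "Gx x = 0" by (auto simp: Gx_def)
  next
    fix p q r s assume "farey_nbrs p q r s"
    then obtain W where n: "nodeW W = (p,q,r,s)" using farey_node by blast
    have v: "valid (nodeW W)" by (rule valid_nodeW)
    have i: "0 \<le> lft (nodeW W)" "rgt (nodeW W) \<le> 1" using node_in01[of W] by auto
    have i2: "lft (nodeW W) < med (nodeW W)" "med (nodeW W) < rgt (nodeW W)"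
      using lft_lt_med[OF v] med_lt_rgt[OF v] by auto
    have "Gx (med (nodeW W)) = mu^2 * Gx (lft (nodeW W)) + mu * Gx (rgt (nodeW W))"
      using i i2 G_med[of W] G_lft[of W] G_rgt[of W] mu_plus_sq
      by (simp add: Gx_def algebra_simps) (metis add.commute distrib_left mult.commute mult_1)
    thus "Gx (real (p + r) / real (q + s)) = (1 - 1 / golden) * Gx (real p / real q) + 1 / golden * Gx (real r / real s)"
      using n by (simp add: one_minus_lam mu_def)
  qed
next
  fix g
  assume P: "continuous_on {0..1} g \<and> g 0 = 0 \<and> g 1 = 1 \<and>
    (\<forall>p q r s. farey_nbrs p q r s \<longrightarrow>
        g (real (p + r) / real (q + s)) = (1 - 1 / golden) * g (real p / real q) + 1 / golden * g (real r / real s)) \<and>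
    (\<forall>x. x \<notin> {0..1} \<longrightarrow> g x = 0)"
  have gn: "\<And>W. g (lft (nodeW W)) = lvW W" using g_node[of g] P by auto
  show "g = Gx"
  proof
    fix u
    show "g u = Gx u"
    proof (cases "u \<in> {0..<1}")
      case True
      define X where "X k = lft (nodeW (word True u k))" for k
      have inv: "\<And>k. X k \<le> u \<and> u < rgt (nodeW (word True u k))"
        using chn_inv_True[of u] True by (simp add: X_def chn_word)
      have X01: "\<And>k. X k \<in> {0..1}" using inv node_in01 True by (auto simp: X_def) (smt (verit))
      have Xlim: "X \<longlonglongrightarrow> u"
      proof (rule real_tendsto_sandwich[of "\<lambda>k. u - 1 / (real k + 1)" _ _ "\<lambda>k. u"])
        show "\<forall>\<^sub>F k in sequentially. u - 1 / (real k + 1) \<le> X k"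
        proof (rule always_eventually, rule allI)
          fix k
          have "rgt (nodeW (word True u k)) - lft (nodeW (word True u k)) \<le> 1 / (real k + 1)"
            using node_len_bound[of "word True u k"] by simp
          thus "u - 1 / (real k + 1) \<le> X k" using inv[of k] by (simp add: X_def)
        qed
        show "\<forall>\<^sub>F k in sequentially. X k \<le> u" using inv by auto
        have "(\<lambda>k. 1 / (real k + 1)) \<longlonglongrightarrow> 0"
          using LIMSEQ_inverse_real_of_nat by (simp add: inverse_eq_divide add.commute)
        from tendsto_diff[OF tendsto_const[of u] this]
        show "(\<lambda>k. u - 1 / (real k + 1)) \<longlonglongrightarrow> u" by simp
        show "(\<lambda>k. u) \<longlonglongrightarrow> u" by simp
      qed
      have l1: "(g \<circ> X) \<longlonglongrightarrow> g u"
        using P X01 Xlim True unfolding continuous_on_sequentially by auto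
      have gX: "(g \<circ> X) = (\<lambda>k. lvW (word True u k))" using gn by (auto simp: X_def)
      have l2: "(\<lambda>k. lvW (word True u k)) \<longlonglongrightarrow> G u"
      proof (rule real_tendsto_sandwich[of "\<lambda>k. G u - mu ^ k" _ _ "\<lambda>k. G u"])
        show "\<forall>\<^sub>F k in sequentially. G u - mu ^ k \<le> lvW (word True u k)"
        proof (rule always_eventually, rule allI)
          fix k
          have "G u \<le> lvW (word True u k) + wW (word True u k)"
            using G_bounds[of "word True u k" u] inv[of k] by (simp add: X_def)
          thus "G u - mu ^ k \<le> lvW (word True u k)" using wW_le[of "word True u k"] by simp
        qed
        show "\<forall>\<^sub>F k in sequentially. lvW (word True u k) \<le> G u" using lv_le_G by auto
        show "(\<lambda>k. G u - mu ^ k) \<longlonglongrightarrow> G u"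
          using mu_pos mu_lt1 by (intro tendsto_eq_intros LIMSEQ_power_zero) auto
        show "(\<lambda>k. G u) \<longlonglongrightarrow> G u" by simp
      qed
      have "g u = G u" using LIMSEQ_unique[OF l1] l2 gX by simp
      thus ?thesis using True by (simp add: Gx_def)
    next
      case False
      show ?thesis
      proof (cases "u = 1")
        case True thus ?thesis using P G_one by (simp add: Gx_def)
      next
        case False2: False
        hence "u \<notin> {0..1}" using False by auto
        thus ?thesis using P by (auto simp: Gx_def)
      qed
    qed
  qed
qed


lemma inv_less_iff: "0 < (A::real) \<Longrightarrow> 0 < B \<Longrightarrow> (1/A < 1/B) = (B < A)"
  by (simp add: field_simps)

definition irr :: "real \<Rightarrow> bool" where "irr x \<longleftrightarrow> 0 < x \<and> x < 1 \<and> x \<notin> \<rat>"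

lemma med_rat: "med n \<in> \<rat>" by (cases n) auto
lemma lft_rat: "lft n \<in> \<rat>" by (cases n) auto
lemma rgt_rat: "rgt n \<in> \<rat>" by (cases n) auto

lemma gauss_irr: assumes "irr x" shows "irr (gauss_map x)"
proof -
  have x: "0 < x" "x < 1" "x \<notin> \<rat>" using assms by (auto simp: irr_def)
  have i: "1 / x \<notin> \<rat>"
  proof
    assume "1 / x \<in> \<rat>" hence "1 / (1 / x) \<in> \<rat>" by (rule Rats_divide[OF Rats_1])
    thus False using x by simp
  qed
  have ni: "gauss_map x \<notin> \<rat>"
  proof
    assume "gauss_map x \<in> \<rat>"
    hence "gauss_map x + of_int \<lfloor>1/x\<rfloor> \<in> \<rat>" by (intro Rats_add) auto
    thus False using i by (simp add: gauss_map_def)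
  qed
  have "0 \<le> gauss_map x" "gauss_map x < 1" unfolding gauss_map_def by linarith+
  moreover have "gauss_map x \<noteq> 0" using ni by auto
  ultimately show ?thesis using ni by (simp add: irr_def)
qed

lemma irr_iter: "irr x \<Longrightarrow> irr ((gauss_map ^^ i) x)"
  by (induction i) (auto intro: gauss_irr)

lemma cfq_shift: "i \<ge> 1 \<Longrightarrow> cf_quot x (Suc i) = cf_quot (gauss_map x) i"
  unfolding cf_quot_def by (cases i) (auto simp: funpow_Suc_right simp del: funpow.simps)

lemma floor_inv_ge1: "irr x \<Longrightarrow> \<lfloor>1 / x\<rfloor> \<ge> 1"
proof -
  assume "irr x"
  hence "1 / x > 1" by (auto simp: irr_def)
  thus ?thesis by linarith
qed

lemma cfq_ge1: assumes "irr x" "i \<ge> 1" shows "cf_quot x i \<ge> 1"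
  using floor_inv_ge1[OF irr_iter[OF assms(1), of "i - 1"]] unfolding cf_quot_def by linarith

lemma cfq1: "cf_quot x 1 = nat \<lfloor>1 / x\<rfloor>" by (simp add: cf_quot_def)

lemma x_eq: assumes "irr x" shows "x = 1 / (real (cf_quot x 1) + gauss_map x)"
proof -
  have f: "\<lfloor>1 / x\<rfloor> \<ge> 0" using floor_inv_ge1[OF assms] by linarith
  have "real (cf_quot x 1) = of_int \<lfloor>1 / x\<rfloor>" unfolding cfq1 using of_nat_nat[OF f] by simp
  hence "real (cf_quot x 1) + gauss_map x = 1 / x" by (simp add: gauss_map_def)
  thus ?thesis using assms by (simp add: irr_def)
qed

lemma x_bounds: assumes "irr x"
  shows "1 / (real (cf_quot x 1) + 1) < x" "x < 1 / real (cf_quot x 1)"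
proof -
  have g: "irr (gauss_map x)" by (rule gauss_irr[OF assms])
  have a: "real (cf_quot x 1) \<ge> 1" using cfq_ge1[OF assms, of 1] by simp
  have e: "x = 1 / (real (cf_quot x 1) + gauss_map x)" by (rule x_eq[OF assms])
  have g0: "0 < gauss_map x" "gauss_map x < 1" using g by (auto simp: irr_def)
  have x0: "x > 0" using assms by (simp add: irr_def)
  have p1: "x * gauss_map x > 0" using g0 x0 by simp
  have p2: "x * gauss_map x < x" using g0 x0 by simp
  have ee: "x * real (cf_quot x 1) + x * gauss_map x = 1"
    using e a g0 by (simp add: field_simps)
  have "1 < x * (real (cf_quot x 1) + 1)" using ee p2 by (simp add: algebra_simps)
  thus "1 / (real (cf_quot x 1) + 1) < x" using a by (simp add: field_simps)
  have "x * real (cf_quot x 1) < 1" using ee p1 by simp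
  thus "x < 1 / real (cf_quot x 1)" using a by (simp add: field_simps)
qed

lemma lt_irr: assumes "irr x" shows "lt True x k = (med (chn True x k) < x)"
proof -
  have "med (chn True x k) \<noteq> x" using med_rat[of "chn True x k"] assms by (auto simp: irr_def)
  thus ?thesis by (auto simp: lt_def goR_def)
qed

lemma chn_init:
  assumes "irr x" "k \<le> cf_quot x 1 - 1"
  shows "chn True x k = (0, 1, 1, k + 1)"
  using assms(2)
proof (induction k)
  case 0 then show ?case by (simp add: root_def)
next
  case (Suc k)
  have c: "chn True x k = (0,1,1,k+1)" using Suc by simp
  have a: "real (cf_quot x 1) \<ge> real k + 2" using Suc by linarith
  have "x < 1 / real (cf_quot x 1)" by (rule x_bounds(2)[OF assms(1)])
  also have "\<dots> \<le> 1 / (real k + 2)" using a by (intro divide_left_mono) auto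
  finally have "\<not> lt True x k" using c by (simp add: lt_def goR_def add.commute)
  thus ?case using c by (simp add: stp_def lt_def)
qed

lemma lt_init: assumes "irr x" "k < cf_quot x 1 - 1" shows "\<not> lt True x k"
proof -
  have c: "chn True x k = (0,1,1,k+1)" using chn_init[OF assms(1)] assms(2) by simp
  have a: "real (cf_quot x 1) \<ge> real k + 2" using assms(2) by linarith
  have "x < 1 / real (cf_quot x 1)" by (rule x_bounds(2)[OF assms(1)])
  also have "\<dots> \<le> 1 / (real k + 2)" using a by (intro divide_left_mono) auto
  finally show ?thesis using c by (simp add: lt_def goR_def add.commute)
qed

lemma lt_turn: assumes "irr x" shows "lt True x (cf_quot x 1 - 1)"
proof -
  let ?a = "cf_quot x 1"
  have a1: "?a \<ge> 1" using cfq_ge1[OF assms, of 1] by simp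
  have c: "chn True x (?a - 1) = (0,1,1,?a)" using chn_init[OF assms, of "?a - 1"] a1 by simp
  have "1 / (real ?a + 1) < x" by (rule x_bounds(1)[OF assms])
  thus ?thesis using c a1 by (simp add: lt_def goR_def add.commute)
qed

fun imgN :: "nat \<Rightarrow> node \<Rightarrow> node" where
  "imgN a (p,q,r,s) = (s, a * s + r, q, a * q + p)"

lemma imgN_lch: "imgN a (lch n) = rch (imgN a n)"
  by (cases n) (simp add: algebra_simps)
lemma imgN_rch: "imgN a (rch n) = lch (imgN a n)"
  by (cases n) (simp add: algebra_simps)

lemma med_imgN: assumes "valid n" shows "med (imgN a n) = 1 / (real a + med n)"
proof (cases n)
  case (fields p q r s)
  have "real q + real s > 0" using assms fields by auto
  thus ?thesis using fields by (simp add: field_simps)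
qed

lemma chn_shift:
  assumes "irr x"
  shows "chn True x (cf_quot x 1 + j) = imgN (cf_quot x 1) (chn True (gauss_map x) j)
       \<and> lt True x (cf_quot x 1 + j) = (\<not> lt True (gauss_map x) j)"
proof (induction j)
  let ?a = "cf_quot x 1" and ?y = "gauss_map x"
  have a1: "?a \<ge> 1" using cfq_ge1[OF assms, of 1] by simp
  have y: "irr ?y" by (rule gauss_irr[OF assms])
  have xe: "x = 1 / (real ?a + ?y)" by (rule x_eq[OF assms])
  have ypos: "?y > 0" using y by (simp add: irr_def)
  {
    fix j
    assume IH: "chn True x (?a + j) = imgN ?a (chn True ?y j)"
    let ?N = "chn True ?y j"
    have v: "valid ?N" by (rule valid_chn)
    have m0: "med ?N > 0"
    proof -
      have "lft ?N < med ?N" by (rule lft_lt_med[OF v])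
      moreover have "lft ?N \<ge> 0" using node_in01[of "word True ?y j"] by (simp add: chn_word)
      ultimately show ?thesis by simp
    qed
    have "lt True x (?a + j) = (med (imgN ?a ?N) < x)" using lt_irr[OF assms] IH by simp
    also have "\<dots> = (1 / (real ?a + med ?N) < 1 / (real ?a + ?y))" using med_imgN[OF v] xe by simp
    also have "\<dots> = (?y < med ?N)" using m0 ypos a1 inv_less_iff[of "real ?a + med ?N" "real ?a + ?y"] by simp
    also have "\<dots> = (\<not> lt True ?y j)"
    proof -
    have "med ?N \<noteq> ?y" using med_rat[of ?N] y by (auto simp: irr_def)
    thus ?thesis using lt_irr[OF y, of j] by auto
  qed
    finally have "lt True x (?a + j) = (\<not> lt True ?y j)" .
  } note step = this
  case 0
  obtain a' where a': "?a = Suc a'" using a1 by (cases ?a) auto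
  have s1: "chn True x ?a = stp (goR True x (chn True x a')) (chn True x a')"
    unfolding a' by (rule chn.simps(2))
  have c0: "chn True x a' = (0,1,1,?a)" using chn_init[OF assms, of "?a - 1"] a' by simp
  have g0: "goR True x (chn True x a')" using lt_turn[OF assms] a' by (simp add: lt_def)
  have "chn True x ?a = (1, ?a + 1, 1, ?a)" using s1 c0 g0 by (simp add: stp_def)
  hence "chn True x ?a = imgN ?a (chn True ?y 0)" by (simp add: root_def)
  thus ?case using step[of 0] by simp
next
  let ?a = "cf_quot x 1" and ?y = "gauss_map x"
  case (Suc j)
  have a1: "?a \<ge> 1" using cfq_ge1[OF assms, of 1] by simp
  have y: "irr ?y" by (rule gauss_irr[OF assms])
  have xe: "x = 1 / (real ?a + ?y)" by (rule x_eq[OF assms])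
  have ypos: "?y > 0" using y by (simp add: irr_def)
  have IH1: "chn True x (?a + j) = imgN ?a (chn True ?y j)" and IH2: "lt True x (?a + j) = (\<not> lt True ?y j)"
    using Suc by auto
  have c1: "chn True x (?a + Suc j) = imgN ?a (chn True ?y (Suc j))"
    using IH1 IH2 by (simp add: stp_def lt_def imgN_lch imgN_rch)
  let ?N = "chn True ?y (Suc j)"
  have v: "valid ?N" by (rule valid_chn)
  have m0: "med ?N > 0"
  proof -
    have "lft ?N < med ?N" by (rule lft_lt_med[OF v])
    moreover have "lft ?N \<ge> 0" using node_in01[of "word True ?y (Suc j)"] by (simp add: chn_word)
    ultimately show ?thesis by simp
  qed
  have "lt True x (?a + Suc j) = (med (imgN ?a ?N) < x)" using lt_irr[OF assms] c1 by simp
  also have "\<dots> = (1 / (real ?a + med ?N) < 1 / (real ?a + ?y))" using med_imgN[OF v] xe by simp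
  also have "\<dots> = (?y < med ?N)" using m0 ypos a1 inv_less_iff[of "real ?a + med ?N" "real ?a + ?y"] by simp
  also have "\<dots> = (\<not> lt True ?y (Suc j))"
  proof -
    have "med ?N \<noteq> ?y" using med_rat[of ?N] y by (auto simp: irr_def)
    thus ?thesis using lt_irr[OF y, of "Suc j"] by auto
  qed
  finally show ?case using c1 by simp
qed


definition pos :: "real \<Rightarrow> nat \<Rightarrow> nat" where
  "pos x m = (\<Sum>i=1..m. cf_quot x i) - 1"

lemma sum_cfq_ge: "irr x \<Longrightarrow> (\<Sum>i=1..m. cf_quot x i) \<ge> m"
proof (induction m)
  case 0 then show ?case by simp
next
  case (Suc m)
  have "cf_quot x (Suc m) \<ge> 1" using cfq_ge1[OF Suc.prems] by simp
  then show ?case using Suc by (simp add: sum.cl_ivl_Suc)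
qed

lemma pos_0[simp]: "pos x 0 = 0" by (simp add: pos_def)
lemma pos_1: "pos x 1 = cf_quot x 1 - 1" by (simp add: pos_def)
lemma pos_Suc0[simp]: "pos x (Suc 0) = cf_quot x (Suc 0) - Suc 0" by (simp add: pos_def)

lemma pos_Suc: assumes "irr x" "m \<ge> 1" shows "pos x (Suc m) = pos x m + cf_quot x (Suc m)"
proof -
  have "(\<Sum>i=1..m. cf_quot x i) \<ge> 1" using sum_cfq_ge[OF assms(1), of m] assms(2) by simp
  thus ?thesis by (simp add: pos_def sum.cl_ivl_Suc)
qed

lemma pos_ge: "irr x \<Longrightarrow> pos x m \<ge> m - 1"
  using sum_cfq_ge[of x m] by (simp add: pos_def)

lemma pos_shift:
  assumes "irr x" "m \<ge> 2"
  shows "pos x m = cf_quot x 1 + pos (gauss_map x) (m - 1)"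
proof -
  obtain n where n: "m = Suc (Suc n)" using assms(2) by (cases m; cases "m - 1") auto
  have y: "irr (gauss_map x)" by (rule gauss_irr[OF assms(1)])
  have "(\<Sum>i=1..m. cf_quot x i) = cf_quot x 1 + (\<Sum>i=Suc 1..Suc (Suc n). cf_quot x i)"
    using n by (simp add: sum.atLeast_Suc_atMost)
  also have "(\<Sum>i=Suc 1..Suc (Suc n). cf_quot x i) = (\<Sum>i=1..Suc n. cf_quot x (Suc i))"
    by (rule sum.shift_bounds_cl_Suc_ivl)
  also have "\<dots> = (\<Sum>i=1..Suc n. cf_quot (gauss_map x) i)"
    by (intro sum.cong) (auto simp: cfq_shift)
  finally have e: "(\<Sum>i=1..m. cf_quot x i) = cf_quot x 1 + (\<Sum>i=1..Suc n. cf_quot (gauss_map x) i)" .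
  have "(\<Sum>i=1..Suc n. cf_quot (gauss_map x) i) \<ge> 1" using sum_cfq_ge[OF y, of "Suc n"] by simp
  thus ?thesis using e n by (simp add: pos_def)
qed

lemma BLK:
  assumes "irr x" "1 \<le> m" "pos x (m - 1) \<le> k" "k < pos x m"
  shows "lt True x k = even m"
  using assms
proof (induction m arbitrary: x k rule: less_induct)
  case (less m)
  let ?a = "cf_quot x 1" and ?y = "gauss_map x"
  have y: "irr ?y" by (rule gauss_irr[OF less.prems(1)])
  have a1: "?a \<ge> 1" using cfq_ge1[OF less.prems(1), of 1] by simp
  consider "m = 1" | "m = 2" | "m \<ge> 3" using less.prems(2) by linarith
  then show ?case
  proof cases
    case 1
    then show ?thesis using lt_init[OF less.prems(1), of k] less.prems by (simp add: pos_1)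
  next
    case 2
    have p2: "pos x 2 = ?a + pos ?y 1" using pos_shift[OF less.prems(1), of 2] by simp
    have k1: "?a - 1 \<le> k" "k < ?a + pos ?y 1" using less.prems 2 p2 by (auto simp: pos_1)
    show ?thesis
    proof (cases "k = ?a - 1")
      case True thus ?thesis using lt_turn[OF less.prems(1)] 2 by simp
    next
      case False
      hence ka: "?a \<le> k" using k1 by linarith
      define j where "j = k - ?a"
      have j: "k = ?a + j" using ka by (simp add: j_def)
      have "j < pos ?y 1" using k1 j by simp
      hence "\<not> lt True ?y j" using less.IH[of 1 ?y j] y 2 by simp
      thus ?thesis using chn_shift[OF less.prems(1), of j] j 2 by simp
    qed
  next
    case 3
    have p1: "pos x (m - 1) = ?a + pos ?y (m - 2)" using pos_shift[OF less.prems(1), of "m - 1"] 3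
      by (simp add: numeral_2_eq_2)
    have p2: "pos x m = ?a + pos ?y (m - 1)" using pos_shift[OF less.prems(1), of m] 3 by simp
    have ka: "?a \<le> k" using less.prems(3) p1 by linarith
    define j where "j = k - ?a"
    have j: "k = ?a + j" using ka by (simp add: j_def)
    have mm: "m - 1 - 1 = m - 2" by simp
    have "pos ?y (m - 1 - 1) \<le> j" "j < pos ?y (m - 1)" using less.prems(3,4) p1 p2 j unfolding mm
      by linarith+
    hence "lt True ?y j = even (m - 1)" using less.IH[of "m - 1" ?y j] y 3 by simp
    hence "lt True x k = (\<not> even (m - 1))" using chn_shift[OF less.prems(1), of j] j by simp
    thus ?thesis using 3 by simp
  qed
qed

definition ex :: "bool list \<Rightarrow> nat" where "ex W = length W + length (filter id W)"

lemma wW_ex: "wW W = mu ^ ex W" by (simp add: wW_def ex_def)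

lemma ex_word_Suc: "ex (word b u (Suc k)) = ex (word b u k) + (if lt b u k then 2 else 1)"
  by (simp add: ex_def word_Suc)

lemma ex_mono: "j \<le> k \<Longrightarrow> ex (word b u j) \<le> ex (word b u k)"
proof (induction k)
  case 0 then show ?case by simp
next
  case (Suc k) then show ?case by (cases "j = Suc k") (auto simp: ex_word_Suc le_Suc_eq)
qed

lemma ex_init: assumes "irr x" "k \<le> cf_quot x 1 - 1" shows "ex (word True x k) = k"
  using assms(2)
proof (induction k)
  case 0 then show ?case by (simp add: ex_def)
next
  case (Suc k) then show ?case using lt_init[OF assms(1), of k] by (simp add: ex_word_Suc)
qed

lemma BLK_block:
  assumes "irr x" "m \<ge> 1" "j < cf_quot x (Suc m)"
  shows "lt True x (pos x m + j) = even (Suc m)"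
  using BLK[OF assms(1), of "Suc m" "pos x m + j"] pos_Suc[OF assms(1,2)] assms by simp

lemma ex_block:
  assumes "irr x" "m \<ge> 1" "j \<le> cf_quot x (Suc m)"
  shows "ex (word True x (pos x m + j)) = ex (word True x (pos x m)) + j * (if even (Suc m) then 2 else 1)"
  using assms(3)
proof (induction j)
  case 0 then show ?case by simp
next
  case (Suc j)
  have "lt True x (pos x m + j) = even (Suc m)" using BLK_block[OF assms(1,2), of j] Suc by simp
  then show ?case using Suc by (simp add: ex_word_Suc)
qed

lemma sign_factor: "(3/2 + 1/2 * (-1::real) ^ n) = (if even n then 2 else 1)"
  by (cases "even n") auto

lemma S_phi_Suc: "S_phi (Suc m) x = S_phi m x + real (cf_quot x (Suc m)) * (if even (Suc m) then 2 else 1)"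
  unfolding S_phi_def using sign_factor[of "Suc m"] by (simp add: sum.cl_ivl_Suc)

lemma S_phi_mono: "m \<le> n \<Longrightarrow> S_phi m x \<le> S_phi n x"
proof (induction n)
  case 0 then show ?case by simp
next
  case (Suc n)
  show ?case
  proof (cases "m = Suc n")
    case False
    hence "S_phi m x \<le> S_phi n x" using Suc by simp
    thus ?thesis by (simp add: S_phi_Suc)
  qed simp
qed

lemma ex_pos: assumes "irr x" "m \<ge> 1"
  shows "real (ex (word True x (pos x m))) = S_phi m x - 1"
  using assms(2)
proof (induction m rule: dec_induct)
  case base
  have a1: "cf_quot x 1 \<ge> 1" using cfq_ge1[OF assms(1), of 1] by simp
  have "ex (word True x (pos x 1)) = cf_quot x 1 - 1" using ex_init[OF assms(1)] by (simp add: pos_1)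
  moreover have "S_phi 1 x = real (cf_quot x 1)" by (simp add: S_phi_def)
  ultimately show ?case using a1 by (simp add: of_nat_diff)
next
  case (step m)
  have "ex (word True x (pos x (Suc m))) = ex (word True x (pos x m)) + cf_quot x (Suc m) * (if even (Suc m) then 2 else 1)"
    using ex_block[OF assms(1) step(1), of "cf_quot x (Suc m)"] pos_Suc[OF assms(1) step(1)] by simp
  then show ?case using step by (simp add: S_phi_Suc)
qed

lemma block_dens:
  assumes "irr x" "m \<ge> 1" "j \<le> cf_quot x (Suc m)"
  shows "(even (Suc m) \<longrightarrow> dq (chn True x (pos x m + j)) = dq (chn True x (pos x m)) + j * ds (chn True x (pos x m))
                         \<and> ds (chn True x (pos x m + j)) = ds (chn True x (pos x m)))
       \<and> (odd (Suc m) \<longrightarrow> ds (chn True x (pos x m + j)) = ds (chn True x (pos x m)) + j * dq (chn True x (pos x m))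
                         \<and> dq (chn True x (pos x m + j)) = dq (chn True x (pos x m)))"
  using assms(3)
proof (induction j)
  case 0 then show ?case by simp
next
  case (Suc j)
  have "lt True x (pos x m + j) = even (Suc m)" using BLK_block[OF assms(1,2), of j] Suc by simp
  then show ?case using Suc by (auto simp: stp_def lt_def)
qed

lemma gpow: "golden ^ Suc (Suc m) = golden ^ Suc m + golden ^ m"
proof -
  have "golden ^ Suc (Suc m) = golden ^ m * golden^2" by (simp add: power2_eq_square)
  also have "\<dots> = golden ^ m * (golden + 1)" using golden_sq by simp
  also have "\<dots> = golden ^ Suc m + golden ^ m" by (simp add: algebra_simps)
  finally show ?thesis .
qed

definition inv_dens :: "nat \<Rightarrow> real \<Rightarrow> real \<Rightarrow> bool" where
  "inv_dens m q s \<longleftrightarrow>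
     (even m \<longrightarrow> golden * q \<ge> golden ^ m \<and> golden^2 * s \<ge> golden ^ m \<and> s \<le> q) \<and>
     (odd m \<longrightarrow> golden * s \<ge> golden ^ m \<and> golden^2 * q \<ge> golden ^ m \<and> q \<le> s)"

lemma inv_dens_pos:
  assumes "irr x" "m \<ge> 1"
  shows "inv_dens m (real (dq (chn True x (pos x m)))) (real (ds (chn True x (pos x m))))"
  using assms(2)
proof (induction m rule: dec_induct)
  case base
  have a1: "cf_quot x 1 \<ge> 1" using cfq_ge1[OF assms(1), of 1] by simp
  have c: "chn True x (pos x 1) = (0,1,1,cf_quot x 1)" using chn_init[OF assms(1), of "cf_quot x 1 - 1"] a1
    by (simp add: pos_1)
  have g: "golden \<le> golden^2" using golden_gt1 by (simp add: power2_eq_square)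
  have "golden * 1 \<le> golden * real (cf_quot x 1)" using a1 golden_gt1 by simp
  thus ?case using c a1 g by (simp add: inv_dens_def)
next
  case (step m)
  let ?q = "real (dq (chn True x (pos x m)))" and ?s = "real (ds (chn True x (pos x m)))"
  let ?b = "cf_quot x (Suc m)"
  have b1: "real ?b \<ge> 1" using cfq_ge1[OF assms(1), of "Suc m"] by simp
  note bd = block_dens[OF assms(1) step(1), of ?b, simplified]
  have ps: "pos x (Suc m) = pos x m + ?b" by (rule pos_Suc[OF assms(1) step(1)])
  have g0: "golden > 0" using golden_gt1 by simp
  have qs0: "?q \<ge> 0" "?s \<ge> 0" by auto
  have gg: "golden^2 = golden + 1" by (rule golden_sq)
  show ?case
  proof (cases "even m")
    case True
    hence I: "golden * ?q \<ge> golden ^ m" "golden^2 * ?s \<ge> golden ^ m" "?s \<le> ?q" using step(3)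
      by (auto simp: inv_dens_def)
    have e: "real (dq (chn True x (pos x (Suc m)))) = ?q" "real (ds (chn True x (pos x (Suc m)))) = ?s + real ?b * ?q"
      using bd True ps by auto
    have "?q \<le> real ?b * ?q" using mult_right_mono[OF b1 qs0(1)] by simp
    hence "?s + real ?b * ?q \<ge> ?s + ?q" by linarith
    hence A: "golden^2 * (?s + real ?b * ?q) \<ge> golden^2 * ?s + golden^2 * ?q"
      using g0 by (simp add: algebra_simps mult_left_mono)
    have B: "golden^2 * ?q \<ge> golden ^ Suc m" using I(1) g0 by (simp add: power2_eq_square mult.assoc)
    have "golden^2 * (?s + real ?b * ?q) \<ge> golden ^ Suc (Suc m)"
    proof -
      have "golden ^ Suc (Suc m) = golden ^ Suc m + golden ^ m" by (rule gpow)
      thus ?thesis using A B I(2) by linarith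
    qed
    hence C: "golden * (?s + real ?b * ?q) \<ge> golden ^ Suc m" using g0
      by (simp add: power2_eq_square mult.assoc)
    have D: "golden^2 * ?q \<ge> golden ^ Suc m" by (rule B)
    have "?q \<le> real ?b * ?q" using mult_right_mono[OF b1 qs0(1)] by simp
    hence E: "?q \<le> ?s + real ?b * ?q" using qs0 by linarith
    have ev: "\<not> even (Suc m)" using True by simp
    show ?thesis unfolding inv_dens_def e using ev C D E by blast
  next
    case False
    hence I: "golden * ?s \<ge> golden ^ m" "golden^2 * ?q \<ge> golden ^ m" "?q \<le> ?s" using step(3)
      by (auto simp: inv_dens_def)
    have e: "real (ds (chn True x (pos x (Suc m)))) = ?s" "real (dq (chn True x (pos x (Suc m)))) = ?q + real ?b * ?s"
      using bd False ps by auto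
    have "?s \<le> real ?b * ?s" using mult_right_mono[OF b1 qs0(2)] by simp
    hence "?q + real ?b * ?s \<ge> ?q + ?s" by linarith
    hence A: "golden^2 * (?q + real ?b * ?s) \<ge> golden^2 * ?q + golden^2 * ?s"
      using g0 by (simp add: algebra_simps mult_left_mono)
    have B: "golden^2 * ?s \<ge> golden ^ Suc m" using I(1) g0 by (simp add: power2_eq_square mult.assoc)
    have "golden^2 * (?q + real ?b * ?s) \<ge> golden ^ Suc (Suc m)"
    proof -
      have "golden ^ Suc (Suc m) = golden ^ Suc m + golden ^ m" by (rule gpow)
      thus ?thesis using A B I(2) by linarith
    qed
    hence C: "golden * (?q + real ?b * ?s) \<ge> golden ^ Suc m" using g0
      by (simp add: power2_eq_square mult.assoc)
    have "?s \<le> real ?b * ?s" using mult_right_mono[OF b1 qs0(2)] by simp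
    hence E: "?s \<le> ?q + real ?b * ?s" using qs0 by linarith
    have ev: "even (Suc m)" using False by simp
    show ?thesis unfolding inv_dens_def e using ev C B E by blast
  qed
qed


lemma ivt_nat: "P K \<Longrightarrow> \<not> P J \<Longrightarrow> K \<le> J \<Longrightarrow> \<exists>k. K \<le> k \<and> k < J \<and> P k \<and> \<not> P (Suc k)"
proof (induction J)
  case 0 then show ?case by simp
next
  case (Suc J)
  show ?case
  proof (cases "P J")
    case True
    have "K \<noteq> Suc J" using Suc.prems by auto
    hence "K \<le> J" using Suc.prems by simp
    thus ?thesis using True Suc.prems by auto
  next
    case False
    have "K \<noteq> Suc J" using Suc.prems by auto
    hence "K \<le> J" using Suc.prems by simp
    then obtain k where "K \<le> k \<and> k < J \<and> P k \<and> \<not> P (Suc k)" using Suc.IH Suc.prems False by blast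
    thus ?thesis by (intro exI[of _ k]) auto
  qed
qed

lemma chn_strict: assumes "irr x" shows "lft (chn True x k) < x \<and> x < rgt (chn True x k)"
proof -
  have "lft (chn True x k) \<le> x \<and> x < rgt (chn True x k)" using chn_inv_True[of x k] assms
    by (auto simp: irr_def)
  moreover have "lft (chn True x k) \<noteq> x" using lft_rat[of "chn True x k"] assms by (auto simp: irr_def)
  ultimately show ?thesis by auto
qed

lemma chn_Suc: "chn b u (Suc k) = stp (lt b u k) (chn b u k)" by (simp add: lt_def)
declare chn.simps(2)[simp del]

lemma chn_sub: "k \<le> k' \<Longrightarrow> lft (chn b u k) \<le> lft (chn b u k') \<and> rgt (chn b u k') \<le> rgt (chn b u k)"
proof (induction k' rule: dec_induct)
  case base then show ?case by simp
next
  case (step n)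
  have "lft (chn b u n) \<le> lft (chn b u (Suc n)) \<and> rgt (chn b u (Suc n)) \<le> rgt (chn b u n)"
    using stp_sub[OF valid_chn[of b u n]] by (simp add: chn_Suc)
  then show ?case using step by auto
qed

lemma dens_mono: "k \<le> k' \<Longrightarrow> dq (chn b u k) \<le> dq (chn b u k') \<and> ds (chn b u k) \<le> ds (chn b u k')"
proof (induction k' rule: dec_induct)
  case base then show ?case by simp
next
  case (step n) then show ?case by (auto simp: chn_Suc stp_def)
qed

lemma run_rgt: "k < k' \<Longrightarrow> (\<forall>i. k < i \<and> i < k' \<longrightarrow> lt b u i) \<Longrightarrow> rgt (chn b u k') = rgt (chn b u (Suc k))"
proof (induction k')
  case 0 then show ?case by simp
next
  case (Suc n)
  show ?case
  proof (cases "n = k")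
    case True then show ?thesis by simp
  next
    case False
    hence "k < n" using Suc.prems by simp
    hence "rgt (chn b u n) = rgt (chn b u (Suc k))" "lt b u n" using Suc by auto
    then show ?thesis by (simp add: chn_Suc stp_def)
  qed
qed

lemma run_lft: "k < k' \<Longrightarrow> (\<forall>i. k < i \<and> i < k' \<longrightarrow> \<not> lt b u i) \<Longrightarrow> lft (chn b u k') = lft (chn b u (Suc k))"
proof (induction k')
  case 0 then show ?case by simp
next
  case (Suc n)
  show ?case
  proof (cases "n = k")
    case True then show ?thesis by simp
  next
    case False
    hence "k < n" using Suc.prems by simp
    hence "lft (chn b u n) = lft (chn b u (Suc k))" "\<not> lt b u n" using Suc by auto
    then show ?thesis by (simp add: chn_Suc stp_def)
  qed
qed

lemma pos_strict: "irr x \<Longrightarrow> m \<ge> 1 \<Longrightarrow> pos x m < pos x (Suc m)"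
  using pos_Suc[of x m] cfq_ge1[of x "Suc m"] by simp

lemma pos_mono: assumes "irr x" "m \<le> n" shows "pos x m \<le> pos x n"
  using assms(2)
proof (induction n rule: dec_induct)
  case base then show ?case by simp
next
  case (step n)
  show ?case
  proof (cases "n = 0")
    case True then show ?thesis using step by simp
  next
    case False then show ?thesis using step pos_strict[OF assms(1), of n] by simp
  qed
qed

lemma blk_exists: assumes "irr x" shows "\<exists>m\<ge>1. pos x (m - 1) \<le> k \<and> k < pos x m"
proof -
  have ex: "\<exists>m. k < pos x m" using pos_ge[OF assms, of "k + 2"] by (intro exI[of _ "k+2"]) simp
  define m where "m = (LEAST m. k < pos x m)"
  have m: "k < pos x m" unfolding m_def by (rule LeastI_ex[OF ex])
  have m1: "m \<ge> 1" using m by (cases m) auto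
  have "\<not> k < pos x (m - 1)" unfolding m_def using m1 not_less_Least[of "m - 1" "\<lambda>m. k < pos x m"]
    by (simp add: m_def)
  thus ?thesis using m m1 by auto
qed

definition nxt :: "real \<Rightarrow> nat \<Rightarrow> nat" where
  "nxt x k = (LEAST j. k < j \<and> lt True x j = lt True x k)"

lemma nxt_props:
  assumes "irr x" "m \<ge> 1" "pos x (m - 1) \<le> k" "k < pos x m"
  shows "k < nxt x k \<and> nxt x k \<le> pos x (Suc m) \<and> lt True x (nxt x k) = lt True x k
         \<and> (\<forall>i. k < i \<and> i < nxt x k \<longrightarrow> lt True x i \<noteq> lt True x k)"
proof -
  have lk: "lt True x k = even m" by (rule BLK[OF assms])
  have "\<exists>w. k < w \<and> w \<le> pos x (Suc m) \<and> lt True x w = lt True x k"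
  proof (cases "Suc k < pos x m")
    case True
    have "lt True x (Suc k) = even m" using BLK[OF assms(1,2), of "Suc k"] True assms by simp
    moreover have "Suc k \<le> pos x (Suc m)" using True pos_strict[OF assms(1,2)] by simp
    ultimately show ?thesis using lk by (intro exI[of _ "Suc k"]) auto
  next
    case False
    let ?w = "pos x (Suc m)"
    have "lt True x ?w = even (Suc (Suc m))"
      using BLK[OF assms(1), of "Suc (Suc m)" ?w] pos_strict[OF assms(1), of "Suc m"] by simp
    moreover have "k < ?w" using assms(4) pos_strict[OF assms(1,2)] by simp
    ultimately show ?thesis using lk by (intro exI[of _ ?w]) auto
  qed
  then obtain w where w: "k < w" "w \<le> pos x (Suc m)" "lt True x w = lt True x k" by blast
  have ex: "\<exists>j. k < j \<and> lt True x j = lt True x k" using w by blast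
  have a: "k < nxt x k \<and> lt True x (nxt x k) = lt True x k"
    unfolding nxt_def by (rule LeastI_ex[OF ex])
  have b: "nxt x k \<le> w" unfolding nxt_def using w by (intro Least_le) auto
  have c: "\<forall>i. k < i \<and> i < nxt x k \<longrightarrow> lt True x i \<noteq> lt True x k"
    unfolding nxt_def using not_less_Least by blast
  show ?thesis using a b c w by auto
qed

lemma Gx_eq: "0 \<le> u \<Longrightarrow> u \<le> 1 \<Longrightarrow> Gx u = G u" by (simp add: Gx_def)

lemma chn_01: "0 \<le> lft (chn b u k) \<and> rgt (chn b u k) \<le> 1"
  using node_in01[of "word b u k"] by (simp add: chn_word)

lemma lower_pos:
  assumes x: "irr x" and h: "h > 0"
    and P: "x + h \<le> rgt (chn True x k)" and nP: "\<not> x + h \<le> rgt (chn True x (Suc k))"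
    and blk: "m \<ge> 1" "pos x (m - 1) \<le> k" "k < pos x m"
  shows "(Gx (x + h) - Gx x) / h \<ge> mu^2 * wW (word True x (nxt x k)) * (real (dq (chn True x k)) * real (ds (chn True x k)))"
proof -
  let ?N = "chn True x k" and ?k' = "nxt x k"
  have lk: "\<not> lt True x k"
  proof
    assume "lt True x k"
    hence "rgt (chn True x (Suc k)) = rgt ?N" by (simp add: chn_Suc stp_def)
    thus False using P nP by simp
  qed
  have rs: "rgt (chn True x (Suc k)) = med ?N" using lk by (simp add: chn_Suc stp_def)
  note np = nxt_props[OF x blk]
  have k': "k < ?k'" "\<not> lt True x ?k'" "\<forall>i. k < i \<and> i < ?k' \<longrightarrow> lt True x i" using np lk by auto
  have r': "rgt (chn True x ?k') = med ?N" using run_rgt[OF k'(1) k'(3)] rs by simp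
  let ?W = "word True x ?k' @ [True]"
  have lQ: "lft (nodeW ?W) = med (chn True x ?k')" by (simp add: stp_def chn_word)
  have rQ: "rgt (nodeW ?W) = med ?N" using r' by (simp add: stp_def chn_word)
  have "rgt (chn True x (Suc ?k')) = med (chn True x ?k')" using k'(2) by (simp add: chn_Suc stp_def)
  hence xl: "x < lft (nodeW ?W)" using chn_strict[OF x, of "Suc ?k'"] lQ by simp
  have xr: "rgt (nodeW ?W) < x + h" using nP rs rQ by simp
  have x01: "0 \<le> x" "x \<le> 1" using x by (auto simp: irr_def)
  have xh01: "0 \<le> x + h" "x + h \<le> 1" using x01 h P chn_01[of True x k] by auto
  have "G (x + h) \<ge> G (rgt (nodeW ?W))" using G_mono xr by simp
  moreover have "G x \<le> G (lft (nodeW ?W))" using G_mono xl by simp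
  ultimately have "G (x + h) - G x \<ge> G (rgt (nodeW ?W)) - G (lft (nodeW ?W))" by linarith
  also have "G (rgt (nodeW ?W)) - G (lft (nodeW ?W)) = mu^2 * wW (word True x ?k')"
    using G_rgt[of ?W] G_lft[of ?W] by simp
  finally have num: "Gx (x + h) - Gx x \<ge> mu^2 * wW (word True x ?k')"
    using Gx_eq xh01 x01 by simp
  have v: "valid ?N" by (rule valid_chn)
  have "h < rgt ?N - lft ?N" using P chn_strict[OF x, of k] by linarith
  also have "\<dots> = 1 / (real (dq ?N) * real (ds ?N))" by (rule len_node[OF v])
  finally have hb: "h * (real (dq ?N) * real (ds ?N)) < 1"
    using dq_pos[OF v] ds_pos[OF v] by (simp add: field_simps)
  have w0: "mu^2 * wW (word True x ?k') \<ge> 0" using wW_pos[of "word True x ?k'"] by simp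
  have "mu^2 * wW (word True x ?k') * (real (dq ?N) * real (ds ?N))
        \<le> (mu^2 * wW (word True x ?k')) / h"
  proof -
    have "mu^2 * wW (word True x ?k') * (real (dq ?N) * real (ds ?N)) * h
          = (mu^2 * wW (word True x ?k')) * (h * (real (dq ?N) * real (ds ?N)))" by (simp add: algebra_simps)
    also have "\<dots> \<le> (mu^2 * wW (word True x ?k')) * 1" using hb w0 by (intro mult_left_mono) auto
    finally have "mu^2 * wW (word True x ?k') * (real (dq ?N) * real (ds ?N)) * h \<le> mu^2 * wW (word True x ?k')"
      by simp
    thus ?thesis using h by (simp add: field_simps)
  qed
  also have "\<dots> \<le> (Gx (x + h) - Gx x) / h" using num h by (simp add: divide_right_mono)
  finally show ?thesis .
qed

lemma lower_neg:
  assumes x: "irr x" and h: "h < 0"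
    and P: "lft (chn True x k) \<le> x + h" and nP: "\<not> lft (chn True x (Suc k)) \<le> x + h"
    and blk: "m \<ge> 1" "pos x (m - 1) \<le> k" "k < pos x m"
  shows "(Gx (x + h) - Gx x) / h \<ge> mu^2 * wW (word True x (nxt x k)) * (real (dq (chn True x k)) * real (ds (chn True x k)))"
proof -
  let ?N = "chn True x k" and ?k' = "nxt x k"
  have lk: "lt True x k"
  proof (rule ccontr)
    assume "\<not> lt True x k"
    hence "lft (chn True x (Suc k)) = lft ?N" by (simp add: chn_Suc stp_def)
    thus False using P nP by simp
  qed
  have ls: "lft (chn True x (Suc k)) = med ?N" using lk by (simp add: chn_Suc stp_def)
  note np = nxt_props[OF x blk]
  have k': "k < ?k'" "lt True x ?k'" "\<forall>i. k < i \<and> i < ?k' \<longrightarrow> \<not> lt True x i" using np lk by auto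
  have l': "lft (chn True x ?k') = med ?N" using run_lft[OF k'(1) k'(3)] ls by simp
  let ?W = "word True x ?k' @ [False]"
  have rQ: "rgt (nodeW ?W) = med (chn True x ?k')" by (simp add: stp_def chn_word)
  have lQ: "lft (nodeW ?W) = med ?N" using l' by (simp add: stp_def chn_word)
  have "lft (chn True x (Suc ?k')) = med (chn True x ?k')" using k'(2) by (simp add: chn_Suc stp_def)
  hence xr: "rgt (nodeW ?W) < x" using chn_strict[OF x, of "Suc ?k'"] rQ by simp
  have xl: "x + h < lft (nodeW ?W)" using nP ls lQ by simp
  have x01: "0 \<le> x" "x \<le> 1" using x by (auto simp: irr_def)
  have xh01: "0 \<le> x + h" "x + h \<le> 1" using x01 h P chn_01[of True x k] by auto
  have "G x \<ge> G (rgt (nodeW ?W))" using G_mono xr by simp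
  moreover have "G (x + h) \<le> G (lft (nodeW ?W))" using G_mono xl by simp
  ultimately have "G x - G (x + h) \<ge> G (rgt (nodeW ?W)) - G (lft (nodeW ?W))" by linarith
  also have "G (rgt (nodeW ?W)) - G (lft (nodeW ?W)) = mu * wW (word True x ?k')"
    using G_rgt[of ?W] G_lft[of ?W] by simp
  finally have num0: "Gx x - Gx (x + h) \<ge> mu * wW (word True x ?k')"
    using Gx_eq xh01 x01 by simp
  have "mu^2 \<le> mu" using mu_pos mu_lt1 by (simp add: power2_eq_square)
  hence "mu^2 * wW (word True x ?k') \<le> mu * wW (word True x ?k')"
    using wW_pos[of "word True x ?k'"] by (simp add: mult_right_mono)
  hence num: "Gx x - Gx (x + h) \<ge> mu^2 * wW (word True x ?k')" using num0 by linarith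
  have v: "valid ?N" by (rule valid_chn)
  have "-h < rgt ?N - lft ?N" using P chn_strict[OF x, of k] by linarith
  also have "\<dots> = 1 / (real (dq ?N) * real (ds ?N))" by (rule len_node[OF v])
  finally have hb: "(-h) * (real (dq ?N) * real (ds ?N)) < 1"
    using dq_pos[OF v] ds_pos[OF v] by (simp add: field_simps)
  have w0: "mu^2 * wW (word True x ?k') \<ge> 0" using wW_pos[of "word True x ?k'"] by simp
  have "mu^2 * wW (word True x ?k') * (real (dq ?N) * real (ds ?N))
        \<le> (mu^2 * wW (word True x ?k')) / (-h)"
  proof -
    have "mu^2 * wW (word True x ?k') * (real (dq ?N) * real (ds ?N)) * (-h)
          = (mu^2 * wW (word True x ?k')) * ((-h) * (real (dq ?N) * real (ds ?N)))" by (simp add: algebra_simps)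
    also have "\<dots> \<le> (mu^2 * wW (word True x ?k')) * 1" using hb w0 by (intro mult_left_mono) auto
    finally have "mu^2 * wW (word True x ?k') * (real (dq ?N) * real (ds ?N)) * (-h) \<le> mu^2 * wW (word True x ?k')"
      by simp
    thus ?thesis using h by (simp add: field_simps)
  qed
  also have "\<dots> \<le> (Gx x - Gx (x + h)) / (-h)" using num h by (intro divide_right_mono) auto
  also have "\<dots> = (Gx (x + h) - Gx x) / h"
    by (metis minus_diff_eq minus_divide_divide)
  finally show ?thesis .
qed


lemma dens_lb:
  assumes x: "irr x" and n: "n \<ge> 1" and k: "pos x n \<le> k"
  shows "golden^2 * real (dq (chn True x k)) \<ge> golden ^ n \<and> golden^2 * real (ds (chn True x k)) \<ge> golden ^ n"
proof -
  let ?q = "real (dq (chn True x (pos x n)))" and ?s = "real (ds (chn True x (pos x n)))"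
  have I: "inv_dens n ?q ?s" by (rule inv_dens_pos[OF x n])
  have g1: "golden \<ge> 1" using golden_gt1 by simp
  have q0: "?q \<ge> 0" "?s \<ge> 0" by auto
  have up: "\<And>t. golden * t \<ge> golden ^ n \<Longrightarrow> t \<ge> 0 \<Longrightarrow> golden^2 * t \<ge> golden ^ n"
  proof -
    fix t :: real assume a: "golden * t \<ge> golden ^ n" "t \<ge> 0"
    have "golden * t \<ge> 0" using g1 a(2) by simp
    hence "1 * (golden * t) \<le> golden * (golden * t)" using g1 by (intro mult_right_mono) auto
    hence "golden * t \<le> golden * (golden * t)" by simp
    thus "golden^2 * t \<ge> golden ^ n" using a by (simp add: power2_eq_square mult.assoc)
  qed
  have base: "golden^2 * ?q \<ge> golden ^ n \<and> golden^2 * ?s \<ge> golden ^ n"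
    using I up q0 by (cases "even n") (auto simp: inv_dens_def)
  have m: "dq (chn True x (pos x n)) \<le> dq (chn True x k) \<and> ds (chn True x (pos x n)) \<le> ds (chn True x k)"
    by (rule dens_mono[OF k])
  have "golden^2 * ?q \<le> golden^2 * real (dq (chn True x k))" using m by (intro mult_left_mono) auto
  moreover have "golden^2 * ?s \<le> golden^2 * real (ds (chn True x k))" using m by (intro mult_left_mono) auto
  ultimately show ?thesis using base by linarith
qed

lemma ln_mu: "ln mu = - ln golden"
  using golden_gt1 by (simp add: mu_def ln_div)

lemma asym:
  assumes x: "irr x" and c: "0 \<le> c" "c < 4" and T: "\<forall>t\<ge>T. S_phi (2*t) x \<le> c * real t" and M: "M > 0"
  shows "\<exists>m0\<ge>2. \<forall>m\<ge>m0. mu^2 * mu ^ (ex (word True x (pos x (Suc m)))) * (golden^(m-1) / golden^2)^2 \<ge> M"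
proof -
  let ?lg = "ln golden"
  have lg: "?lg > 0" using golden_gt1 by simp
  define L0 where "L0 = ln M / ?lg"
  define m0 where "m0 = nat \<lceil>(\<bar>L0\<bar> + 7 + c) / (2 - c/2)\<rceil> + 2 * T + 2"
  have cc: "2 - c/2 > 0" using c by simp
  show ?thesis
  proof (intro exI[of _ m0] conjI allI impI)
    show "m0 \<ge> 2" by (simp add: m0_def)
    fix m assume m: "m \<ge> m0"
    let ?E = "ex (word True x (pos x (Suc m)))"
    have m2: "m \<ge> 2" using m by (simp add: m0_def)
    have E: "real ?E = S_phi (Suc m) x - 1" using ex_pos[OF x, of "Suc m"] by simp
    let ?t = "m div 2 + 1"
    have tT: "?t \<ge> T" using m by (simp add: m0_def)
    have S1: "S_phi (Suc m) x \<le> S_phi (2 * ?t) x" by (intro S_phi_mono) presburger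
    have "real (m div 2) \<le> real m / 2" by linarith
    hence "c * real ?t \<le> c * (real m / 2 + 1)" using c by (intro mult_left_mono) auto
    hence S2: "S_phi (Suc m) x \<le> c * (real m / 2 + 1)" using S1 T tT by (smt (verit))
    have mbig: "real m \<ge> (\<bar>L0\<bar> + 7 + c) / (2 - c/2)" using m unfolding m0_def by linarith
    hence "real m * (2 - c/2) \<ge> \<bar>L0\<bar> + 7 + c" using cc by (simp add: field_simps)
    hence key: "2 * real m - 7 - S_phi (Suc m) x \<ge> L0" using S2 by (simp add: algebra_simps)
    define V where "V = mu^2 * mu ^ ?E * (golden^(m-1) / golden^2)^2"
    have g0: "golden > 0" using golden_gt1 by simp
    have V0: "V > 0" using mu_pos g0 by (simp add: V_def)
    have "ln V = 2 * ln mu + real ?E * ln mu + 2 * (real (m - 1) * ?lg - 2 * ?lg)"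
      using mu_pos g0 by (simp add: V_def ln_mult ln_div ln_realpow)
    also have "\<dots> = ?lg * (2 * real m - 7 - S_phi (Suc m) x)"
    proof -
      have S: "S_phi (Suc m) x = real ?E + 1" using E by simp
      show ?thesis unfolding S using m2 by (simp add: ln_mu of_nat_diff algebra_simps)
    qed
    finally have lnV: "ln V = ?lg * (2 * real m - 7 - S_phi (Suc m) x)" .
    have "ln M = ?lg * L0" using lg by (simp add: L0_def)
    also have "\<dots> \<le> ln V" using lnV key lg by (simp add: mult_left_mono)
    finally have "M \<le> V" using M V0 by simp
    thus "mu^2 * mu ^ ?E * (golden^(m-1) / golden^2)^2 \<ge> M" by (simp add: V_def)
  qed
qed

lemma quant_bound:
  assumes x: "irr x" and blk: "m \<ge> 2" "pos x (m - 1) \<le> k" "k < pos x m"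
  shows "mu^2 * wW (word True x (nxt x k)) * (real (dq (chn True x k)) * real (ds (chn True x k)))
         \<ge> mu^2 * mu ^ (ex (word True x (pos x (Suc m)))) * (golden^(m-1) / golden^2)^2"
proof -
  have np: "nxt x k \<le> pos x (Suc m)" using nxt_props[OF x _ blk(2,3)] blk(1) by simp
  have "ex (word True x (nxt x k)) \<le> ex (word True x (pos x (Suc m)))" by (rule ex_mono[OF np])
  hence w: "wW (word True x (nxt x k)) \<ge> mu ^ (ex (word True x (pos x (Suc m))))"
    unfolding wW_ex using mu_pos mu_lt1 by (intro power_decreasing) auto
  have d: "golden^2 * real (dq (chn True x k)) \<ge> golden ^ (m-1) \<and> golden^2 * real (ds (chn True x k)) \<ge> golden ^ (m-1)"
    using dens_lb[OF x, of "m - 1" k] blk by simp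
  have g0: "golden > 0" using golden_gt1 by simp
  have dq: "real (dq (chn True x k)) \<ge> golden^(m-1) / golden^2" using d g0 by (simp add: field_simps)
  have ds: "real (ds (chn True x k)) \<ge> golden^(m-1) / golden^2" using d g0 by (simp add: field_simps)
  have p0: "golden^(m-1) / golden^2 \<ge> 0" using g0 by simp
  have "(golden^(m-1) / golden^2)^2 \<le> real (dq (chn True x k)) * real (ds (chn True x k))"
    using mult_mono[OF dq ds _ p0] by (simp add: power2_eq_square)
  moreover have "mu ^ (ex (word True x (pos x (Suc m)))) > 0" using mu_pos by simp
  ultimately have "mu ^ (ex (word True x (pos x (Suc m)))) * (golden^(m-1) / golden^2)^2
       \<le> wW (word True x (nxt x k)) * (real (dq (chn True x k)) * real (ds (chn True x k)))"
    using w by (intro mult_mono) auto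
  hence "mu^2 * (mu ^ (ex (word True x (pos x (Suc m)))) * (golden^(m-1) / golden^2)^2)
       \<le> mu^2 * (wW (word True x (nxt x k)) * (real (dq (chn True x k)) * real (ds (chn True x k))))"
    using mu_pos by (intro mult_left_mono) auto
  thus ?thesis by (simp add: mult.assoc)
qed

lemma limsup_hyp:
  assumes "limsup (\<lambda>t. ereal (S_phi (2 * t) x / real t)) < 4"
  shows "\<exists>c T. 0 \<le> c \<and> c < 4 \<and> (\<forall>t\<ge>T. S_phi (2*t) x \<le> c * real t)"
proof -
  obtain c0 where c0: "limsup (\<lambda>t. ereal (S_phi (2 * t) x / real t)) < ereal c0" "ereal c0 < 4"
    using ereal_dense2[OF assms] by blast
  have "\<forall>\<^sub>F t in sequentially. ereal (S_phi (2 * t) x / real t) < ereal c0"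
    using Limsup_lessD[OF c0(1)] .
  then obtain T where T: "\<forall>t\<ge>T. S_phi (2 * t) x / real t < c0"
    by (auto simp: eventually_sequentially)
  show ?thesis
  proof (intro exI[of _ "max c0 0"] exI[of _ "max T 1"] conjI allI impI)
    show "0 \<le> max c0 0" by simp
    show "max c0 0 < 4" using c0(2) by simp
    fix t assume t: "max T 1 \<le> t"
    hence "S_phi (2 * t) x / real t < c0" "t \<ge> 1" using T by auto
    hence "S_phi (2 * t) x < c0 * real t" by (simp add: field_simps)
    also have "\<dots> \<le> max c0 0 * real t" by (intro mult_right_mono) auto
    finally show "S_phi (2 * t) x \<le> max c0 0 * real t" by simp
  qed
qed

theorem part_i:
  assumes x: "irr x" and hyp: "limsup (\<lambda>t. ereal (S_phi (2 * t) x / real t)) < 4"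
  shows "filterlim (\<lambda>h. (DTU (1 / golden) (x + h) - DTU (1 / golden) x) / h) at_top (at 0)"
proof -
  obtain c T where cT: "0 \<le> c" "c < 4" "\<forall>t\<ge>T. S_phi (2*t) x \<le> c * real t"
    using limsup_hyp[OF hyp] by blast
  show ?thesis unfolding DTU_eq filterlim_at_top
  proof
    fix Z :: real
    define M where "M = max Z 1"
    have M0: "M > 0" by (simp add: M_def)
    obtain m0 where m0: "m0 \<ge> 2" "\<forall>m\<ge>m0. mu^2 * mu ^ (ex (word True x (pos x (Suc m)))) * (golden^(m-1) / golden^2)^2 \<ge> M"
      using asym[OF x cT M0] by blast
    define K where "K = pos x m0"
    define d where "d = min (rgt (chn True x K) - x) (x - lft (chn True x K))"
    have d0: "d > 0" using chn_strict[OF x, of K] by (simp add: d_def)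
    have good: "Z \<le> q" if "K \<le> k" and qb: "q \<ge> mu^2 * wW (word True x (nxt x k)) * (real (dq (chn True x k)) * real (ds (chn True x k)))"
      and blk: "m \<ge> 1" "pos x (m - 1) \<le> k" "k < pos x m" for k q m
    proof -
      have "m > m0"
      proof (rule ccontr)
        assume "\<not> m > m0" hence "pos x m \<le> pos x m0" using pos_mono[OF x] by simp
        thus False using that blk by (simp add: K_def)
      qed
      hence mm: "m \<ge> 2" "m \<ge> m0" using m0 by auto
      have "q \<ge> mu^2 * mu ^ (ex (word True x (pos x (Suc m)))) * (golden^(m-1) / golden^2)^2"
        using qb quant_bound[OF x mm(1) blk(2,3)] by linarith
      thus ?thesis using m0(2) mm(2) by (simp add: M_def) (smt (verit))
    qed
    show "\<forall>\<^sub>F h in at 0. Z \<le> (Gx (x + h) - Gx x) / h"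
      unfolding eventually_at
    proof (intro exI[of _ d] conjI ballI impI)
      show "d > 0" by (rule d0)
      fix h :: real assume "h \<in> UNIV" and hh: "h \<noteq> 0 \<and> dist h 0 < d"
      obtain n where n: "n \<noteq> 0" "inverse (real n) < \<bar>h\<bar>" using real_arch_inverse[of "\<bar>h\<bar>"] hh by auto
      have lenJ: "rgt (chn True x n) - lft (chn True x n) < \<bar>h\<bar>"
      proof -
        have "rgt (chn True x n) - lft (chn True x n) \<le> 1 / (real n + 1)"
          using node_len_bound[of "word True x n"] by (simp add: chn_word)
        also have "\<dots> \<le> inverse (real n)" using n by (simp add: field_simps)
        finally show ?thesis using n by linarith
      qed
      have sK: "lft (chn True x K) < x" "x < rgt (chn True x K)" using chn_strict[OF x] by auto
      have sn: "lft (chn True x n) < x" "x < rgt (chn True x n)" using chn_strict[OF x] by auto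
      let ?J = "max n K"
      have subJ: "lft (chn True x n) \<le> lft (chn True x ?J) \<and> rgt (chn True x ?J) \<le> rgt (chn True x n)"
        by (rule chn_sub) simp
      show "Z \<le> (Gx (x + h) - Gx x) / h"
      proof (cases "h > 0")
        case True
        let ?P = "\<lambda>j. x + h \<le> rgt (chn True x j)"
        have PK: "?P K" using hh True by (simp add: d_def dist_real_def)
        have nPJ: "\<not> ?P ?J" using lenJ subJ sn True by auto
        have KJ: "K \<le> ?J" by simp
        obtain k where k: "K \<le> k" "k < ?J" "?P k" "\<not> ?P (Suc k)"
          using ivt_nat[of ?P K ?J, OF PK nPJ KJ] by blast
        obtain m where blk: "m \<ge> 1" "pos x (m - 1) \<le> k" "k < pos x m" using blk_exists[OF x] by blast
        show ?thesis using good[OF k(1) lower_pos[OF x True k(3) k(4) blk] blk] .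
      next
        case False
        hence hn: "h < 0" using hh by simp
        let ?P = "\<lambda>j. lft (chn True x j) \<le> x + h"
        have PK: "?P K" using hh hn by (simp add: d_def dist_real_def)
        have nPJ: "\<not> ?P ?J" using lenJ subJ sn hn by auto
        have KJ: "K \<le> ?J" by simp
        obtain k where k: "K \<le> k" "k < ?J" "?P k" "\<not> ?P (Suc k)"
          using ivt_nat[of ?P K ?J, OF PK nPJ KJ] by blast
        obtain m where blk: "m \<ge> 1" "pos x (m - 1) \<le> k" "k < pos x m" using blk_exists[OF x] by blast
        show ?thesis using good[OF k(1) lower_neg[OF x hn k(3) k(4) blk] blk] .
      qed
    qed
  qed
qed


definition Md :: "node \<Rightarrow> real" where "Md n = max (real (dq n)) (real (ds n))"

lemma nodeW_repF:
  "dq (nodeW (V @ replicate i False)) = dq (nodeW V) \<and>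
   ds (nodeW (V @ replicate i False)) = ds (nodeW V) + i * dq (nodeW V) \<and>
   lft (nodeW (V @ replicate i False)) = lft (nodeW V) \<and>
   lvW (V @ replicate i False) = lvW V \<and> wW (V @ replicate i False) = mu ^ i * wW V"
proof (induction i)
  case 0 then show ?case by simp
next
  case (Suc i)
  have e: "V @ replicate (Suc i) False = (V @ replicate i False) @ [False]"
    by (metis append_assoc replicate_snoc)
  have a: "nodeW ((V @ replicate i False) @ [False]) = lch (nodeW (V @ replicate i False))"
    by (simp only: nodeW_snoc) (simp add: stp_def)
  have b: "lvW ((V @ replicate i False) @ [False]) = lvW (V @ replicate i False)"
    by (simp only: lvW_snoc) simp
  have c: "wW ((V @ replicate i False) @ [False]) = mu * wW (V @ replicate i False)"
    by (simp only: wW_snoc) simp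
  show ?case unfolding e using Suc a b c by simp
qed

lemma nodeW_repT:
  "ds (nodeW (V @ replicate i True)) = ds (nodeW V) \<and>
   dq (nodeW (V @ replicate i True)) = dq (nodeW V) + i * ds (nodeW V) \<and>
   rgt (nodeW (V @ replicate i True)) = rgt (nodeW V) \<and>
   lvW (V @ replicate i True) + wW (V @ replicate i True) = lvW V + wW V \<and>
   wW (V @ replicate i True) = mu ^ (2 * i) * wW V"
proof (induction i)
  case 0 then show ?case by simp
next
  case (Suc i)
  have e: "V @ replicate (Suc i) True = (V @ replicate i True) @ [True]"
    by (metis append_assoc replicate_snoc)
  have a: "nodeW ((V @ replicate i True) @ [True]) = rch (nodeW (V @ replicate i True))"
    by (simp only: nodeW_snoc) (simp add: stp_def)
  have b: "lvW ((V @ replicate i True) @ [True]) = lvW (V @ replicate i True) + mu * wW (V @ replicate i True)"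
    by (simp only: lvW_snoc) simp
  have c: "wW ((V @ replicate i True) @ [True]) = mu^2 * wW (V @ replicate i True)"
    by (simp only: wW_snoc) simp
  have d: "mu * wW (V @ replicate i True) + mu^2 * wW (V @ replicate i True) = wW (V @ replicate i True)"
    using mu_plus_sq by (metis distrib_right mult_1)
  have f: "mu^2 * mu ^ (2 * i) = mu ^ (2 * Suc i)" by (simp add: power_add[symmetric])
  show ?case unfolding e using Suc a b c d f by (simp add: algebra_simps)
qed

lemma golden_ge: "golden \<ge> 3/2"
proof -
  have "sqrt 5 \<ge> 2" by (simp add: real_le_rsqrt)
  thus ?thesis by (simp add: golden_def)
qed

lemma mu_le: "mu \<le> 2/3"
  using golden_ge golden_gt1 by (simp add: mu_def field_simps)

lemma mu_poly: "(real i + 2) * mu ^ i \<le> 2"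
proof (induction i)
  case 0 then show ?case by simp
next
  case (Suc i)
  have "mu * real i \<le> real i" using mult_left_le_one_le[of "real i" mu] mu_pos mu_lt1 by simp
  hence "(real (Suc i) + 2) * mu \<le> real i + 2" using mu_le by (simp add: algebra_simps)
  hence "(real (Suc i) + 2) * mu ^ Suc i \<le> (real i + 2) * mu ^ i"
    using mu_pos by (simp add: mult.assoc[symmetric] mult_right_mono)
  then show ?case using Suc by linarith
qed

lemma Md_pos: "Md (nodeW V) \<ge> 1"
  using dq_pos[OF valid_nodeW[of V]] by (simp add: Md_def)

lemma quotB:
  assumes z: "lft (nodeW V) < z" "z \<le> rgt (nodeW V)"
  shows "G z - G (lft (nodeW V)) \<le> 2 * wW V * Md (nodeW V)^2 * (z - lft (nodeW V))"
proof -
  let ?l = "lft (nodeW V)" and ?V = "\<lambda>i. V @ replicate i False"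
  let ?P = "\<lambda>i. z \<le> rgt (nodeW (?V i))"
  have P0: "?P 0" using z by simp
  obtain n where n: "n \<noteq> 0" "inverse (real n) < z - ?l" using real_arch_inverse[of "z - ?l"] z by auto
  have "rgt (nodeW (?V n)) - lft (nodeW (?V n)) \<le> 1 / (real (length (?V n)) + 1)" by (rule node_len_bound)
  also have "\<dots> \<le> inverse (real n)" using n by (simp add: field_simps)
  finally have "\<not> ?P n" using n nodeW_repF[of V n] by auto
  then obtain i where i: "?P i" "\<not> ?P (Suc i)" using ivt_nat[of ?P 0 n, OF P0] by auto
  let ?q = "real (dq (nodeW V))" and ?s = "real (ds (nodeW V))"
  have q0: "?q \<ge> 1" "?s \<ge> 1" using dq_pos[OF valid_nodeW[of V]] ds_pos[OF valid_nodeW[of V]] by auto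
  have "G z \<le> G (rgt (nodeW (?V i)))" using i(1) G_mono by simp
  also have "\<dots> = lvW V + mu ^ i * wW V" using G_rgt[of "?V i"] nodeW_repF[of V i] by simp
  finally have num: "G z - G ?l \<le> mu ^ i * wW V" using G_lft[of V] by simp
  have v1: "valid (nodeW (?V (Suc i)))" by (rule valid_nodeW)
  have rf: "dq (nodeW (?V (Suc i))) = dq (nodeW V)" "ds (nodeW (?V (Suc i))) = ds (nodeW V) + Suc i * dq (nodeW V)"
    "lft (nodeW (?V (Suc i))) = lft (nodeW V)"
    using nodeW_repF[of V "Suc i"] by (simp_all del: replicate.simps)
  have "z - ?l > rgt (nodeW (?V (Suc i))) - lft (nodeW (?V (Suc i)))" using i(2) rf(3) by (simp del: replicate.simps)
  also have "rgt (nodeW (?V (Suc i))) - lft (nodeW (?V (Suc i))) = 1 / (?q * (?s + real (Suc i) * ?q))"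
    using len_node[OF v1] rf(1,2) by (simp add: algebra_simps del: replicate.simps)
  finally have zl: "z - ?l > 1 / (?q * (?s + real (Suc i) * ?q))" .
  have Mq: "?q \<le> Md (nodeW V)" "?s \<le> Md (nodeW V)" by (auto simp: Md_def)
  have "?q * (?s + real (Suc i) * ?q) \<le> Md (nodeW V) * (Md (nodeW V) + real (Suc i) * Md (nodeW V))"
    using Mq q0 by (intro mult_mono add_mono mult_left_mono) auto
  also have "\<dots> = (real i + 2) * Md (nodeW V)^2" by (simp add: algebra_simps power2_eq_square)
  finally have den: "?q * (?s + real (Suc i) * ?q) \<le> (real i + 2) * Md (nodeW V)^2" .
  have dpos: "?q * (?s + real (Suc i) * ?q) > 0" using q0 by (intro mult_pos_pos add_pos_nonneg) auto
  have "1 \<le> (z - ?l) * (?q * (?s + real (Suc i) * ?q))" using zl dpos by (simp add: field_simps)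
  also have "\<dots> \<le> (z - ?l) * ((real i + 2) * Md (nodeW V)^2)" using den zl dpos
    by (intro mult_left_mono) (auto, smt (verit) divide_pos_pos)
  finally have one: "1 \<le> (z - ?l) * ((real i + 2) * Md (nodeW V)^2)" .
  have w0: "wW V > 0" by (rule wW_pos)
  have "mu ^ i * wW V \<le> mu ^ i * wW V * ((z - ?l) * ((real i + 2) * Md (nodeW V)^2))"
    using one w0 mu_pos mult_le_cancel_left1[of "mu ^ i * wW V"] by simp
  also have "\<dots> = ((real i + 2) * mu ^ i) * (wW V * Md (nodeW V)^2 * (z - ?l))" by (simp add: algebra_simps)
  also have "\<dots> \<le> 2 * (wW V * Md (nodeW V)^2 * (z - ?l))"
    using mu_poly[of i] w0 z by (intro mult_right_mono) auto
  finally show ?thesis using num by simp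
qed

lemma quotB':
  assumes z: "lft (nodeW V) \<le> z" "z < rgt (nodeW V)"
  shows "G (rgt (nodeW V)) - G z \<le> 2 * wW V * Md (nodeW V)^2 * (rgt (nodeW V) - z)"
proof -
  let ?r = "rgt (nodeW V)" and ?V = "\<lambda>i. V @ replicate i True"
  let ?P = "\<lambda>i. lft (nodeW (?V i)) \<le> z"
  have P0: "?P 0" using z by simp
  obtain n where n: "n \<noteq> 0" "inverse (real n) < ?r - z" using real_arch_inverse[of "?r - z"] z by auto
  have "rgt (nodeW (?V n)) - lft (nodeW (?V n)) \<le> 1 / (real (length (?V n)) + 1)" by (rule node_len_bound)
  also have "\<dots> \<le> inverse (real n)" using n by (simp add: field_simps)
  finally have "\<not> ?P n" using n nodeW_repT[of V n] by auto
  then obtain i where i: "?P i" "\<not> ?P (Suc i)" using ivt_nat[of ?P 0 n, OF P0] by auto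
  let ?q = "real (dq (nodeW V))" and ?s = "real (ds (nodeW V))"
  have q0: "?q \<ge> 1" "?s \<ge> 1" using dq_pos[OF valid_nodeW[of V]] ds_pos[OF valid_nodeW[of V]] by auto
  have "G z \<ge> G (lft (nodeW (?V i)))" using i(1) G_mono by simp
  moreover have "G (lft (nodeW (?V i))) = lvW V + wW V - mu ^ (2 * i) * wW V"
    using G_lft[of "?V i"] nodeW_repT[of V i] by (simp add: algebra_simps)
  ultimately have num0: "G ?r - G z \<le> mu ^ (2 * i) * wW V" using G_rgt[of V] by simp
  have "mu ^ (2 * i) \<le> mu ^ i" using mu_pos mu_lt1 by (intro power_decreasing) auto
  hence num: "G ?r - G z \<le> mu ^ i * wW V" using num0 wW_pos[of V]
    by (smt (verit) mult_right_mono)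
  have v1: "valid (nodeW (?V (Suc i)))" by (rule valid_nodeW)
  have rf: "ds (nodeW (?V (Suc i))) = ds (nodeW V)" "dq (nodeW (?V (Suc i))) = dq (nodeW V) + Suc i * ds (nodeW V)"
    "rgt (nodeW (?V (Suc i))) = rgt (nodeW V)"
    using nodeW_repT[of V "Suc i"] by (simp_all del: replicate.simps)
  have "?r - z > rgt (nodeW (?V (Suc i))) - lft (nodeW (?V (Suc i)))" using i(2) rf(3) by (simp del: replicate.simps)
  also have "rgt (nodeW (?V (Suc i))) - lft (nodeW (?V (Suc i))) = 1 / ((?q + real (Suc i) * ?s) * ?s)"
    using len_node[OF v1] rf(1,2) by (simp add: algebra_simps del: replicate.simps)
  finally have zl: "?r - z > 1 / ((?q + real (Suc i) * ?s) * ?s)" .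
  have Mq: "?q \<le> Md (nodeW V)" "?s \<le> Md (nodeW V)" by (auto simp: Md_def)
  have "(?q + real (Suc i) * ?s) * ?s \<le> (Md (nodeW V) + real (Suc i) * Md (nodeW V)) * Md (nodeW V)"
    using Mq q0 by (intro mult_mono add_mono mult_left_mono) auto
  also have "\<dots> = (real i + 2) * Md (nodeW V)^2" by (simp add: algebra_simps power2_eq_square)
  finally have den: "(?q + real (Suc i) * ?s) * ?s \<le> (real i + 2) * Md (nodeW V)^2" .
  have dpos: "(?q + real (Suc i) * ?s) * ?s > 0" using q0 by (intro mult_pos_pos add_pos_nonneg) auto
  have "1 \<le> (?r - z) * ((?q + real (Suc i) * ?s) * ?s)" using zl dpos by (simp add: field_simps)
  also have "\<dots> \<le> (?r - z) * ((real i + 2) * Md (nodeW V)^2)" using den zl dpos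
    by (intro mult_left_mono) (auto, smt (verit) divide_pos_pos)
  finally have one: "1 \<le> (?r - z) * ((real i + 2) * Md (nodeW V)^2)" .
  have w0: "wW V > 0" by (rule wW_pos)
  have "mu ^ i * wW V \<le> mu ^ i * wW V * ((?r - z) * ((real i + 2) * Md (nodeW V)^2))"
    using one w0 mu_pos mult_le_cancel_left1[of "mu ^ i * wW V"] by simp
  also have "\<dots> = ((real i + 2) * mu ^ i) * (wW V * Md (nodeW V)^2 * (?r - z))" by (simp add: algebra_simps)
  also have "\<dots> \<le> 2 * (wW V * Md (nodeW V)^2 * (?r - z))"
    using mu_poly[of i] w0 z by (intro mult_right_mono) auto
  finally show ?thesis using num by simp
qed


definition Psi :: "real \<Rightarrow> nat \<Rightarrow> real" where
  "Psi x k = wW (word True x k) * Md (chn True x k)^2"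

lemma Psi_nn: "Psi x k \<ge> 0"
  unfolding Psi_def using wW_pos[of "word True x k"] by (intro mult_nonneg_nonneg) auto

lemma mx: assumes "0 \<le> (a::real)" "0 \<le> b"
  shows "(a + b) * b \<le> 2 * (max a b)^2 \<and> a * (a + b) \<le> 2 * (max a b)^2"
proof -
  have "a \<le> max a b" "b \<le> max a b" by auto
  hence "(a + b) * b \<le> (max a b + max a b) * max a b" "a * (a + b) \<le> max a b * (max a b + max a b)"
    using assms by (intro mult_mono add_mono; auto)+
  thus ?thesis by (simp add: power2_eq_square algebra_simps)
qed

lemma Md_child: "Md (stp c n) \<le> 2 * Md n"
  by (cases n) (auto simp: Md_def stp_def)

lemma upper_pos:
  assumes x: "irr x" and h: "h > 0"
    and P: "x + h \<le> rgt (chn True x k)" and nP: "\<not> x + h \<le> rgt (chn True x (Suc k))"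
    and blk: "m \<ge> 1" "pos x (m - 1) \<le> k" "k < pos x m"
  shows "(Gx (x + h) - Gx x) / h \<le> 8 * max (Psi x k) (Psi x (nxt x k))"
proof -
  let ?N = "chn True x k" and ?k' = "nxt x k"
  let ?A = "max (Psi x k) (Psi x ?k')"
  have lk: "\<not> lt True x k"
  proof
    assume "lt True x k"
    hence "rgt (chn True x (Suc k)) = rgt ?N" by (simp add: chn_Suc stp_def)
    thus False using P nP by simp
  qed
  have rs: "rgt (chn True x (Suc k)) = med ?N" using lk by (simp add: chn_Suc stp_def)
  note np = nxt_props[OF x blk]
  have k': "k < ?k'" "\<not> lt True x ?k'" "\<forall>i. k < i \<and> i < ?k' \<longrightarrow> lt True x i" using np lk by auto
  have r': "rgt (chn True x ?k') = med ?N" using run_rgt[OF k'(1) k'(3)] rs by simp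
  let ?m = "med ?N"
  have "rgt (chn True x (Suc ?k')) = med (chn True x ?k')" using k'(2) by (simp add: chn_Suc stp_def)
  hence ym: "x < med (chn True x ?k')" using chn_strict[OF x, of "Suc ?k'"] by simp
  have mh: "?m < x + h" using nP rs by simp
  have xm: "x < ?m" using ym r' med_lt_rgt[OF valid_chn[of True x ?k']] by simp
  have x01: "0 \<le> x" "x \<le> 1" using x by (auto simp: irr_def)
  have xh01: "0 \<le> x + h" "x + h \<le> 1" using x01 h P chn_01[of True x k] by auto
  let ?W' = "word True x ?k'" and ?N' = "chn True x ?k'"
  have v': "valid ?N'" by (rule valid_chn)
  have "G x \<ge> G (lft ?N')" using G_mono chn_strict[OF x, of ?k'] by simp
  hence "G x \<ge> lvW ?W'" using G_lft[of ?W'] by (simp add: chn_word)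
  moreover have "G ?m = lvW ?W' + wW ?W'" using G_rgt[of ?W'] r' by (simp add: chn_word)
  ultimately have a1: "G ?m - G x \<le> wW ?W'" by simp
  have "?m - x \<ge> rgt ?N' - med ?N'" using ym r' by simp
  also have "rgt ?N' - med ?N' = 1 / ((real (dq ?N') + real (ds ?N')) * real (ds ?N'))" by (rule rgt_minus_med[OF v'])
  finally have a2: "?m - x \<ge> 1 / ((real (dq ?N') + real (ds ?N')) * real (ds ?N'))" .
  have dd: "(real (dq ?N') + real (ds ?N')) * real (ds ?N') \<le> 2 * Md ?N'^2"
    using mx[of "real (dq ?N')" "real (ds ?N')"] by (simp add: Md_def)
  have dpos: "(real (dq ?N') + real (ds ?N')) * real (ds ?N') > 0"
    using dq_pos[OF v'] ds_pos[OF v'] by (intro mult_pos_pos add_pos_nonneg) auto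
  have "1 \<le> (?m - x) * ((real (dq ?N') + real (ds ?N')) * real (ds ?N'))" using a2 dpos by (simp add: field_simps)
  also have "\<dots> \<le> (?m - x) * (2 * Md ?N'^2)" using dd xm by (intro mult_left_mono) auto
  finally have one: "1 \<le> (?m - x) * (2 * Md ?N'^2)" .
  have "wW ?W' \<le> wW ?W' * ((?m - x) * (2 * Md ?N'^2))"
    using one wW_pos[of ?W'] mult_le_cancel_left1[of "wW ?W'"] by simp
  hence A: "G ?m - G x \<le> 2 * Psi x ?k' * (?m - x)" using a1 by (simp add: Psi_def algebra_simps)
  let ?Q = "word True x k @ [True]"
  have lQ: "lft (nodeW ?Q) = ?m" by (simp add: stp_def chn_word)
  have rQ: "rgt (nodeW ?Q) = rgt ?N" by (simp add: stp_def chn_word)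
  have B0: "G (x + h) - G ?m \<le> 2 * wW ?Q * Md (nodeW ?Q)^2 * (x + h - ?m)"
    using quotB[of ?Q "x + h"] lQ rQ mh P by simp
  have wQ: "wW ?Q = mu^2 * wW (word True x k)" by simp
  have MQ: "Md (nodeW ?Q) \<le> 2 * Md ?N" using Md_child[of True ?N] by (simp add: chn_word)
  have MQ0: "Md (nodeW ?Q) \<ge> 0" using Md_pos[of ?Q] by simp
  have "Md (nodeW ?Q)^2 \<le> (2 * Md ?N)^2" using MQ MQ0 by (intro power_mono) auto
  moreover have "mu^2 \<le> 1" using mu_pos mu_lt1 by (simp add: power_le_one)
  ultimately have C0: "wW ?Q * Md (nodeW ?Q)^2 \<le> 1 * wW (word True x k) * (2 * Md ?N)^2"
    using wQ wW_pos[of "word True x k"] mu_pos by (intro mult_mono) auto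
  have C1: "1 * wW (word True x k) * (2 * Md ?N)^2 = 4 * Psi x k" by (simp add: Psi_def power_mult_distrib)
  have C: "wW ?Q * Md (nodeW ?Q)^2 \<le> 4 * Psi x k" using C0 C1 by linarith
  have "2 * wW ?Q * Md (nodeW ?Q)^2 * (x + h - ?m) = 2 * (wW ?Q * Md (nodeW ?Q)^2) * (x + h - ?m)"
    by (simp only: mult.assoc)
  also have "\<dots> \<le> 2 * (4 * Psi x k) * (x + h - ?m)" using C mh by (intro mult_right_mono mult_left_mono) auto
  finally have "2 * wW ?Q * Md (nodeW ?Q)^2 * (x + h - ?m) \<le> 8 * Psi x k * (x + h - ?m)" by simp
  hence B: "G (x + h) - G ?m \<le> 8 * Psi x k * (x + h - ?m)" using B0 by linarith
  have "G (x + h) - G x \<le> 8 * Psi x k * (x + h - ?m) + 2 * Psi x ?k' * (?m - x)" using A B by simp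
  also have "\<dots> \<le> 8 * ?A * (x + h - ?m) + 8 * ?A * (?m - x)"
    using mh xm Psi_nn[of x k] Psi_nn[of x ?k'] by (intro add_mono mult_right_mono) auto
  also have "\<dots> = 8 * ?A * h" by (simp add: algebra_simps)
  finally have "Gx (x + h) - Gx x \<le> 8 * ?A * h" using Gx_eq xh01 x01 by simp
  thus ?thesis using h by (simp add: field_simps)
qed

lemma upper_neg:
  assumes x: "irr x" and h: "h < 0"
    and P: "lft (chn True x k) \<le> x + h" and nP: "\<not> lft (chn True x (Suc k)) \<le> x + h"
    and blk: "m \<ge> 1" "pos x (m - 1) \<le> k" "k < pos x m"
  shows "(Gx (x + h) - Gx x) / h \<le> 8 * max (Psi x k) (Psi x (nxt x k))"
proof -
  let ?N = "chn True x k" and ?k' = "nxt x k"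
  let ?A = "max (Psi x k) (Psi x ?k')"
  have lk: "lt True x k"
  proof (rule ccontr)
    assume "\<not> lt True x k"
    hence "lft (chn True x (Suc k)) = lft ?N" by (simp add: chn_Suc stp_def)
    thus False using P nP by simp
  qed
  have ls: "lft (chn True x (Suc k)) = med ?N" using lk by (simp add: chn_Suc stp_def)
  note np = nxt_props[OF x blk]
  have k': "k < ?k'" "lt True x ?k'" "\<forall>i. k < i \<and> i < ?k' \<longrightarrow> \<not> lt True x i" using np lk by auto
  have l': "lft (chn True x ?k') = med ?N" using run_lft[OF k'(1) k'(3)] ls by simp
  let ?m = "med ?N"
  have "lft (chn True x (Suc ?k')) = med (chn True x ?k')" using k'(2) by (simp add: chn_Suc stp_def)
  hence ym: "med (chn True x ?k') < x" using chn_strict[OF x, of "Suc ?k'"] by simp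
  have mh: "x + h < ?m" using nP ls by simp
  have xm: "?m < x" using ym l' lft_lt_med[OF valid_chn[of True x ?k']] by simp
  have x01: "0 \<le> x" "x \<le> 1" using x by (auto simp: irr_def)
  have xh01: "0 \<le> x + h" "x + h \<le> 1" using x01 h P chn_01[of True x k] by auto
  let ?W' = "word True x ?k'" and ?N' = "chn True x ?k'"
  have v': "valid ?N'" by (rule valid_chn)
  have "G x \<le> G (rgt ?N')" using G_mono chn_strict[OF x, of ?k'] by simp
  hence "G x \<le> lvW ?W' + wW ?W'" using G_rgt[of ?W'] by (simp add: chn_word)
  moreover have "G ?m = lvW ?W'" using G_lft[of ?W'] l' by (simp add: chn_word)
  ultimately have a1: "G x - G ?m \<le> wW ?W'" by simp
  have "x - ?m \<ge> med ?N' - lft ?N'" using ym l' by simp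
  also have "med ?N' - lft ?N' = 1 / (real (dq ?N') * (real (dq ?N') + real (ds ?N')))" by (rule med_minus_lft[OF v'])
  finally have a2: "x - ?m \<ge> 1 / (real (dq ?N') * (real (dq ?N') + real (ds ?N')))" .
  have dd: "real (dq ?N') * (real (dq ?N') + real (ds ?N')) \<le> 2 * Md ?N'^2"
    using mx[of "real (dq ?N')" "real (ds ?N')"] by (simp add: Md_def)
  have dpos: "real (dq ?N') * (real (dq ?N') + real (ds ?N')) > 0"
    using dq_pos[OF v'] ds_pos[OF v'] by (intro mult_pos_pos add_pos_nonneg) auto
  have "1 \<le> (x - ?m) * (real (dq ?N') * (real (dq ?N') + real (ds ?N')))" using a2 dpos by (simp add: field_simps)
  also have "\<dots> \<le> (x - ?m) * (2 * Md ?N'^2)" using dd xm by (intro mult_left_mono) auto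
  finally have one: "1 \<le> (x - ?m) * (2 * Md ?N'^2)" .
  have "wW ?W' \<le> wW ?W' * ((x - ?m) * (2 * Md ?N'^2))"
    using one wW_pos[of ?W'] mult_le_cancel_left1[of "wW ?W'"] by simp
  hence A: "G x - G ?m \<le> 2 * Psi x ?k' * (x - ?m)" using a1 by (simp add: Psi_def algebra_simps)
  let ?Q = "word True x k @ [False]"
  have lQ: "lft (nodeW ?Q) = lft ?N" by (simp add: stp_def chn_word)
  have rQ: "rgt (nodeW ?Q) = ?m" by (simp add: stp_def chn_word)
  have B0: "G ?m - G (x + h) \<le> 2 * wW ?Q * Md (nodeW ?Q)^2 * (?m - (x + h))"
    using quotB'[of ?Q "x + h"] lQ rQ mh P by simp
  have wQ: "wW ?Q = mu * wW (word True x k)" by simp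
  have MQ: "Md (nodeW ?Q) \<le> 2 * Md ?N" using Md_child[of False ?N] by (simp add: chn_word)
  have MQ0: "Md (nodeW ?Q) \<ge> 0" using Md_pos[of ?Q] by simp
  have "Md (nodeW ?Q)^2 \<le> (2 * Md ?N)^2" using MQ MQ0 by (intro power_mono) auto
  moreover have "mu \<le> 1" using mu_lt1 by simp
  ultimately have C0: "wW ?Q * Md (nodeW ?Q)^2 \<le> 1 * wW (word True x k) * (2 * Md ?N)^2"
    using wQ wW_pos[of "word True x k"] mu_pos by (intro mult_mono) auto
  have C1: "1 * wW (word True x k) * (2 * Md ?N)^2 = 4 * Psi x k" by (simp add: Psi_def power_mult_distrib)
  have C: "wW ?Q * Md (nodeW ?Q)^2 \<le> 4 * Psi x k" using C0 C1 by linarith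
  have "2 * wW ?Q * Md (nodeW ?Q)^2 * (?m - (x + h)) = 2 * (wW ?Q * Md (nodeW ?Q)^2) * (?m - (x + h))"
    by (simp only: mult.assoc)
  also have "\<dots> \<le> 2 * (4 * Psi x k) * (?m - (x + h))" using C mh by (intro mult_right_mono mult_left_mono) auto
  finally have "2 * wW ?Q * Md (nodeW ?Q)^2 * (?m - (x + h)) \<le> 8 * Psi x k * (?m - (x + h))" by simp
  hence B: "G ?m - G (x + h) \<le> 8 * Psi x k * (?m - (x + h))" using B0 by linarith
  have "G x - G (x + h) \<le> 8 * Psi x k * (?m - (x + h)) + 2 * Psi x ?k' * (x - ?m)" using A B by simp
  also have "\<dots> \<le> 8 * ?A * (?m - (x + h)) + 8 * ?A * (x - ?m)"
    using mh xm Psi_nn[of x k] Psi_nn[of x ?k'] by (intro add_mono mult_right_mono) auto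
  also have "\<dots> = 8 * ?A * (-h)" by (simp add: algebra_simps)
  finally have "Gx x - Gx (x + h) \<le> 8 * ?A * (-h)" using Gx_eq xh01 x01 by simp
  hence "(Gx x - Gx (x + h)) / (-h) \<le> 8 * ?A" using h by (simp add: field_simps)
  moreover have "(Gx x - Gx (x + h)) / (-h) = (Gx (x + h) - Gx x) / h"
    by (metis minus_diff_eq minus_divide_divide)
  ultimately show ?thesis by simp
qed

lemma quot_nonneg: assumes "irr x" "h \<noteq> 0" "0 \<le> x + h" "x + h \<le> 1"
  shows "(Gx (x + h) - Gx x) / h \<ge> 0"
proof -
  have x01: "0 \<le> x" "x \<le> 1" using assms by (auto simp: irr_def)
  show ?thesis
  proof (cases "h > 0")
    case True
    hence "G x \<le> G (x + h)" using G_mono by simp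
    thus ?thesis using True Gx_eq assms x01 by simp
  next
    case False
    hence "h < 0" using assms by simp
    hence "G (x + h) \<le> G x" using G_mono by simp
    hence "Gx (x + h) - Gx x \<le> 0" using Gx_eq assms x01 by simp
    thus ?thesis using \<open>h < 0\<close> by (simp add: divide_nonpos_neg)
  qed
qed


fun phiC :: "nat list \<Rightarrow> real \<Rightarrow> real" where
  "phiC [] u = u"
| "phiC (c # cs) u = 1 / (real c + phiC cs u)"

lemma phiC_01: "(\<forall>c\<in>set cs. c \<ge> 1) \<Longrightarrow> 0 < u \<Longrightarrow> u < 1 \<Longrightarrow> 0 < phiC cs u \<and> phiC cs u < 1"
proof (induction cs)
  case Nil then show ?case by simp
next
  case (Cons c cs)
  hence t: "0 < phiC cs u" "phiC cs u < 1" "real c \<ge> 1" by auto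
  hence "real c + phiC cs u > 1" by simp
  thus ?case by (simp add: field_simps)
qed

lemma phiC_nn: "(\<forall>c\<in>set cs. c \<ge> 1) \<Longrightarrow> 0 \<le> u \<Longrightarrow> u \<le> 1 \<Longrightarrow> 0 \<le> phiC cs u \<and> phiC cs u \<le> 1"
proof (induction cs)
  case Nil then show ?case by simp
next
  case (Cons c cs)
  hence t: "0 \<le> phiC cs u" "phiC cs u \<le> 1" "real c \<ge> 1" by auto
  hence "real c + phiC cs u \<ge> 1" by simp
  thus ?case by (simp add: field_simps)
qed

lemma phiC_cont: "(\<forall>c\<in>set cs. c \<ge> 1) \<Longrightarrow> continuous_on {0..1} (phiC cs)"
proof (induction cs)
  case Nil
  have "phiC [] = (\<lambda>u. u)" by auto
  then show ?case by (simp add: continuous_on_id)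
next
  case (Cons c cs)
  have e: "phiC (c # cs) = (\<lambda>u. 1 / (real c + phiC cs u))" by auto
  have "\<forall>u\<in>{0..1}. real c + phiC cs u \<noteq> 0" using phiC_nn[of cs] Cons.prems
    by (smt (verit, ccfv_SIG) atLeastAtMost_iff list.set_intros(2) list.set_intros(1) of_nat_le_iff of_nat_1)
  moreover have "continuous_on {0..1} (\<lambda>u. real c + phiC cs u)"
    using Cons by (intro continuous_intros) auto
  moreover have ih: "continuous_on {0..1} (phiC cs)" using Cons by auto
  ultimately show ?case unfolding e by (intro continuous_on_divide continuous_intros) auto
qed

lemma fixpt:
  assumes "\<forall>c\<in>set cs. c \<ge> 1" "B \<ge> 2"
  shows "\<exists>y. 0 < y \<and> y < 1 \<and> phiC (B # cs) y = y"
proof -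
  let ?f = "\<lambda>u. u - phiC (B # cs) u"
  have all: "\<forall>c\<in>set (B # cs). c \<ge> 1" using assms by auto
  have c: "continuous_on {0..1} ?f" using phiC_cont[OF all] by (intro continuous_intros) auto
  have t0: "0 \<le> phiC cs 0" "0 \<le> phiC cs 1" using phiC_nn[OF assms(1)] by auto
  have f0: "?f 0 < 0" using t0 assms(2) by simp
  have "real B + phiC cs 1 \<ge> 2" using t0 assms(2) by simp
  hence "phiC (B # cs) 1 \<le> 1/2" by (simp add: field_simps)
  hence f1: "?f 1 > 0" by simp
  obtain y where y: "0 \<le> y" "y \<le> 1" "?f y = 0" using IVT'[of ?f 0 0 1] f0 f1 c by auto
  have "y \<noteq> 0" using y f0 by auto
  moreover have "y \<noteq> 1" using y f1 by auto
  ultimately show ?thesis using y by (intro exI[of _ y]) auto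
qed

lemma gauss_inv: assumes "0 < u" "u < 1" "c \<ge> 1" shows "gauss_map (1 / (real c + u)) = u"
proof -
  have p: "real c + u > 0" using assms by simp
  have "\<lfloor>real c + u\<rfloor> = int c" using assms by (simp add: floor_eq_iff)
  thus ?thesis using p by (simp add: gauss_map_def)
qed

lemma gauss_iter:
  assumes all: "\<forall>c\<in>set L. c \<ge> 1" and y: "0 < y" "y < 1" "phiC L y = y" and i: "i \<le> length L"
  shows "(gauss_map ^^ i) y = phiC (drop i L) y"
  using i
proof (induction i)
  case 0 then show ?case using y by simp
next
  case (Suc i)
  have il: "i < length L" using Suc by simp
  have d: "drop i L = L ! i # drop (Suc i) L" using Cons_nth_drop_Suc[OF il] by simp
  have t: "0 < phiC (drop (Suc i) L) y \<and> phiC (drop (Suc i) L) y < 1"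
    using phiC_01[of "drop (Suc i) L" y] all y by (meson in_set_dropD)
  have ci: "L ! i \<ge> 1" using all il by auto
  have "(gauss_map ^^ Suc i) y = gauss_map (phiC (drop i L) y)" using Suc by simp
  also have "\<dots> = phiC (drop (Suc i) L) y" unfolding d using gauss_inv[of _ "L ! i"] t ci by simp
  finally show ?case .
qed

lemma gauss_period:
  assumes all: "\<forall>c\<in>set L. c \<ge> 1" and y: "0 < y" "y < 1" "phiC L y = y" and L: "L \<noteq> []"
  shows "(gauss_map ^^ i) y = phiC (drop (i mod length L) L) y"
proof -
  let ?P = "length L"
  have gP: "(gauss_map ^^ ?P) y = y" using gauss_iter[OF all y, of ?P] by simp
  have per: "(gauss_map ^^ (j + n * ?P)) y = (gauss_map ^^ j) y" for j n
  proof (induction n)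
    case 0 then show ?case by simp
  next
    case (Suc n)
    have e: "j + Suc n * ?P = (j + n * ?P) + ?P" by simp
    have "(gauss_map ^^ (j + Suc n * ?P)) y = (gauss_map ^^ (j + n * ?P)) ((gauss_map ^^ ?P) y)"
      unfolding e by (simp only: funpow_add o_apply)
    then show ?case using Suc gP by simp
  qed
  have "i = i mod ?P + (i div ?P) * ?P" by simp
  hence "(gauss_map ^^ i) y = (gauss_map ^^ (i mod ?P)) y" using per by metis
  also have "\<dots> = phiC (drop (i mod ?P) L) y" using L by (intro gauss_iter[OF all y]) simp
  finally show ?thesis .
qed

lemma cfq_period:
  assumes all: "\<forall>c\<in>set L. c \<ge> 1" and y: "0 < y" "y < 1" "phiC L y = y" and L: "L \<noteq> []"
  shows "cf_quot y (Suc i) = L ! (i mod length L)"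
proof -
  let ?j = "i mod length L"
  have jl: "?j < length L" using L by simp
  have d: "drop ?j L = L ! ?j # drop (Suc ?j) L" using Cons_nth_drop_Suc[OF jl] by simp
  have t: "0 < phiC (drop (Suc ?j) L) y \<and> phiC (drop (Suc ?j) L) y < 1"
    using phiC_01[of "drop (Suc ?j) L" y] all y by (meson in_set_dropD)
  have ci: "L ! ?j \<ge> 1" using all jl by auto
  have g: "(gauss_map ^^ i) y = 1 / (real (L ! ?j) + phiC (drop (Suc ?j) L) y)"
    using gauss_period[OF all y L, of i] d by simp
  have p: "real (L ! ?j) + phiC (drop (Suc ?j) L) y > 0" using t by simp
  have "\<lfloor>real (L ! ?j) + phiC (drop (Suc ?j) L) y\<rfloor> = int (L ! ?j)" using t by (simp add: floor_eq_iff)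
  thus ?thesis using g p by (simp add: cf_quot_def)
qed

lemma gauss_rat_step:
  assumes u: "0 < u" "u < 1" "u = real a / real d" "d > 0"
  shows "\<exists>a' d'. 0 < d' \<and> d' < d \<and> gauss_map u = real a' / real d'"
proof -
  have a0: "a > 0" using u by (cases a) auto
  have ad: "a < d"
  proof (rule ccontr)
    assume "\<not> a < d" hence "real d \<le> real a" by simp
    hence "u \<ge> 1" using u by (simp add: field_simps)
    thus False using u by simp
  qed
  have inv: "1 / u = real d / real a" using u a0 by simp
  have fl: "\<lfloor>real d / real a\<rfloor> = int (d div a)" by (rule floor_divide_of_nat_eq)
  have dd: "real d = real (d div a) * real a + real (d mod a)"
    by (metis of_nat_add of_nat_mult div_mult_mod_eq)
  have "gauss_map u = real d / real a - real (d div a)" using inv fl by (simp add: gauss_map_def)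
  also have "\<dots> = real (d mod a) / real a" using a0 dd by (simp add: field_simps)
  finally show ?thesis using a0 ad by blast
qed

lemma periodic_irr:
  assumes all: "\<forall>c\<in>set L. c \<ge> 1" and y: "0 < y" "y < 1" "phiC L y = y" and L: "L \<noteq> []"
  shows "y \<notin> \<rat>"
proof
  assume "y \<in> \<rat>"
  then obtain a0 d0 where r: "d0 \<noteq> 0" "\<bar>y\<bar> = real a0 / real d0" by (blast elim: Rats_abs_nat_div_natE)
  let ?R = "\<lambda>d. 0 < d \<and> (\<exists>a. y = real a / real d)"
  have ex: "?R d0" using r y by auto
  define D where "D = (LEAST d. ?R d)"
  have RD: "?R D" unfolding D_def by (rule LeastI[of ?R, OF ex])
  have iter01: "0 < (gauss_map ^^ i) y \<and> (gauss_map ^^ i) y < 1" for i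
  proof -
    have "\<forall>c\<in>set (drop (i mod length L) L). 1 \<le> c" using all by (meson in_set_dropD)
    thus ?thesis using gauss_period[OF all y L, of i] phiC_01[of "drop (i mod length L) L" y] y by simp
  qed
  have claim: "i \<le> length L \<Longrightarrow> \<exists>a d. 0 < d \<and> d + i \<le> D \<and> (gauss_map ^^ i) y = real a / real d" for i
  proof (induction i)
    case 0 then show ?case using RD by auto
  next
    case (Suc i)
    then obtain a d where ad: "0 < d" "d + i \<le> D" "(gauss_map ^^ i) y = real a / real d" by auto
    obtain a' d' where "0 < d'" "d' < d" "gauss_map ((gauss_map ^^ i) y) = real a' / real d'"
      using gauss_rat_step[of "(gauss_map ^^ i) y" a d] iter01[of i] ad by auto
    thus ?case using ad by (intro exI[of _ a'] exI[of _ d']) auto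
  qed
  obtain a d where ad: "0 < d" "d + length L \<le> D" "(gauss_map ^^ length L) y = real a / real d"
    using claim[of "length L"] by auto
  have "(gauss_map ^^ length L) y = y" using gauss_iter[OF all y, of "length L"] by simp
  hence "?R d" using ad by auto
  hence "D \<le> d" unfolding D_def by (rule Least_le)
  moreover have "length L > 0" using L by simp
  ultimately show False using ad by linarith
qed


definition Pn :: "node \<Rightarrow> real" where
  "Pn n = golden * Md n + min (real (dq n)) (real (ds n))"

definition Phi :: "real \<Rightarrow> nat \<Rightarrow> real" where
  "Phi x m = wW (word True x (pos x m)) * Pn (chn True x (pos x m))^2"

lemma Md_le_Pn: "Md n \<le> Pn n"
proof -
  have "Md n \<ge> 0" by (simp add: Md_def)
  hence "Md n \<le> golden * Md n" using golden_gt1 by (simp add: mult_le_cancel_right1)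
  thus ?thesis by (simp add: Pn_def)
qed

lemma Pn_nn: "Pn n \<ge> 0"
  using golden_gt1 by (simp add: Pn_def Md_def)

lemma Phi_nn: "Phi x m \<ge> 0"
  unfolding Phi_def using wW_pos[of "word True x (pos x m)"] by (intro mult_nonneg_nonneg) auto

lemma blockP:
  assumes x: "irr x" and m: "m \<ge> 1" and j: "1 \<le> j" "j \<le> cf_quot x (Suc m)"
  shows "Pn (chn True x (pos x m + j)) \<le> real j * golden * Pn (chn True x (pos x m))"
proof -
  let ?q = "real (dq (chn True x (pos x m)))" and ?s = "real (ds (chn True x (pos x m)))"
  have I: "inv_dens m ?q ?s" by (rule inv_dens_pos[OF x m])
  note bd = block_dens[OF x m j(2)]
  have g0: "golden > 0" and gg: "golden^2 = golden + 1" using golden_gt1 golden_sq by auto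
  have j1: "real j \<ge> 1" using j by simp
  have qs: "?q \<ge> 0" "?s \<ge> 0" by auto
  show ?thesis
  proof (cases "even m")
    case True
    hence sq: "?s \<le> ?q" using I by (simp add: inv_dens_def)
    have e: "real (dq (chn True x (pos x m + j))) = ?q" "real (ds (chn True x (pos x m + j))) = ?s + real j * ?q"
      using bd True by auto
    have "?q \<le> real j * ?q" using mult_right_mono[OF j1 qs(1)] by simp
    hence "?q \<le> ?s + real j * ?q" using qs by linarith
    hence P1: "Pn (chn True x (pos x m + j)) = golden * (?s + real j * ?q) + ?q"
      unfolding Pn_def Md_def e by (simp add: max_def min_def)
    have P0: "Pn (chn True x (pos x m)) = golden * ?q + ?s" using sq unfolding Pn_def Md_def by (simp add: max_def min_def)
    have ex1: "real j * golden * (golden * ?q + ?s) = real j * golden^2 * ?q + real j * golden * ?s"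
      by (simp add: algebra_simps power2_eq_square)
    also have "\<dots> = real j * golden * ?q + real j * ?q + real j * golden * ?s" by (simp add: gg algebra_simps)
    finally have ex2: "real j * golden * (golden * ?q + ?s) = real j * golden * ?q + real j * ?q + real j * golden * ?s" .
    have nn: "(real j - 1) * ?q + (real j - 1) * (golden * ?s) \<ge> 0" using j1 qs g0 by simp
    have "golden * (?s + real j * ?q) + ?q \<le> real j * golden * ?q + real j * ?q + real j * golden * ?s"
      using nn by (simp add: algebra_simps)
    thus ?thesis using P0 P1 ex2 by simp
  next
    case False
    hence sq: "?q \<le> ?s" using I by (simp add: inv_dens_def)
    have e: "real (ds (chn True x (pos x m + j))) = ?s" "real (dq (chn True x (pos x m + j))) = ?q + real j * ?s"
      using bd False by auto
    have "?s \<le> real j * ?s" using mult_right_mono[OF j1 qs(2)] by simp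
    hence "?s \<le> ?q + real j * ?s" using qs by linarith
    hence P1: "Pn (chn True x (pos x m + j)) = golden * (?q + real j * ?s) + ?s"
      unfolding Pn_def Md_def e by (simp add: max_def min_def)
    have P0: "Pn (chn True x (pos x m)) = golden * ?s + ?q" using sq unfolding Pn_def Md_def by (simp add: max_def min_def)
    have ex1: "real j * golden * (golden * ?s + ?q) = real j * golden^2 * ?s + real j * golden * ?q"
      by (simp add: algebra_simps power2_eq_square)
    also have "\<dots> = real j * golden * ?s + real j * ?s + real j * golden * ?q" by (simp add: gg algebra_simps)
    finally have ex2: "real j * golden * (golden * ?s + ?q) = real j * golden * ?s + real j * ?s + real j * golden * ?q" .
    have nn: "(real j - 1) * ?s + (real j - 1) * (golden * ?q) \<ge> 0" using j1 qs g0 by simp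
    have "golden * (?q + real j * ?s) + ?s \<le> real j * golden * ?s + real j * ?s + real j * golden * ?q"
      using nn by (simp add: algebra_simps)
    thus ?thesis using P0 P1 ex2 by simp
  qed
qed

lemma block_w:
  assumes x: "irr x" and m: "m \<ge> 1" and j: "j \<le> cf_quot x (Suc m)"
  shows "wW (word True x (pos x m + j)) = wW (word True x (pos x m)) * mu ^ (j * (if even (Suc m) then 2 else 1))"
  using ex_block[OF x m j] by (simp add: wW_ex power_add)

lemma Psi_block:
  assumes x: "irr x" and m: "m \<ge> 1" and j: "j \<le> cf_quot x (Suc m)"
  shows "Psi x (pos x m + j) \<le> Phi x m * (real (cf_quot x (Suc m)) * golden)^2"
proof -
  let ?b = "cf_quot x (Suc m)"
  have b1: "real ?b \<ge> 1" using cfq_ge1[OF x, of "Suc m"] by simp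
  have g1: "golden \<ge> 1" using golden_gt1 by simp
  have bg1: "real ?b * golden \<ge> 1 * 1" using b1 g1 by (intro mult_mono) auto
  have w: "wW (word True x (pos x m + j)) \<le> wW (word True x (pos x m))"
    using block_w[OF x m j] wW_pos[of "word True x (pos x m)"] mu_pos mu_lt1
    by (simp add: mult_le_cancel_left1 power_le_one)
  have Pp: "Pn (chn True x (pos x m + j)) \<le> real ?b * golden * Pn (chn True x (pos x m))"
  proof (cases "j = 0")
    case True
    have "Pn (chn True x (pos x m)) \<ge> 0" using Md_le_Pn[of "chn True x (pos x m)"] by (simp add: Md_def)
    hence "1 * Pn (chn True x (pos x m)) \<le> (real ?b * golden) * Pn (chn True x (pos x m))"
      using bg1 by (intro mult_right_mono) auto
    thus ?thesis using True by simp
  next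
    case False
    have "Pn (chn True x (pos x m + j)) \<le> real j * golden * Pn (chn True x (pos x m))"
      using blockP[OF x m _ j] False by simp
    also have "\<dots> \<le> real ?b * golden * Pn (chn True x (pos x m))"
      using j golden_gt1 Pn_nn[of "chn True x (pos x m)"]
      by (intro mult_right_mono) auto
    finally show ?thesis .
  qed
  have P0: "Pn (chn True x (pos x m + j)) \<ge> 0" using Md_le_Pn[of "chn True x (pos x m + j)"] by (simp add: Md_def)
  have "Psi x (pos x m + j) \<le> wW (word True x (pos x m + j)) * Pn (chn True x (pos x m + j))^2"
    unfolding Psi_def using Md_le_Pn[of "chn True x (pos x m + j)"] wW_pos[of "word True x (pos x m + j)"]
    by (intro mult_left_mono power_mono) (auto simp: Md_def)
  also have "\<dots> \<le> wW (word True x (pos x m)) * (real ?b * golden * Pn (chn True x (pos x m)))^2"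
    using w Pp P0 wW_pos[of "word True x (pos x m)"] by (intro mult_mono power_mono) auto
  also have "\<dots> = Phi x m * (real ?b * golden)^2" by (simp add: Phi_def power_mult_distrib)
  finally show ?thesis .
qed

lemma Phi_step:
  assumes x: "irr x" and m: "m \<ge> 1"
  shows "Phi x (Suc m) \<le> (real (cf_quot x (Suc m)) * golden)^2 * mu ^ (cf_quot x (Suc m) * (if even (Suc m) then 2 else 1)) * Phi x m"
proof -
  let ?b = "cf_quot x (Suc m)"
  have ps: "pos x (Suc m) = pos x m + ?b" by (rule pos_Suc[OF x m])
  have b1: "?b \<ge> 1" using cfq_ge1[OF x, of "Suc m"] by simp
  have Pp: "Pn (chn True x (pos x m + ?b)) \<le> real ?b * golden * Pn (chn True x (pos x m))"
    using blockP[OF x m b1] by simp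
  have P0: "Pn (chn True x (pos x m + ?b)) \<ge> 0" using Md_le_Pn[of "chn True x (pos x m + ?b)"] by (simp add: Md_def)
  have "Phi x (Suc m) = wW (word True x (pos x m)) * mu ^ (?b * (if even (Suc m) then 2 else 1)) * Pn (chn True x (pos x m + ?b))^2"
    unfolding Phi_def ps using block_w[OF x m, of ?b] by simp
  also have "\<dots> \<le> wW (word True x (pos x m)) * mu ^ (?b * (if even (Suc m) then 2 else 1)) * (real ?b * golden * Pn (chn True x (pos x m)))^2"
  proof -
    have wm: "wW (word True x (pos x m)) * mu ^ (?b * (if even (Suc m) then 2 else 1)) \<ge> 0"
      using wW_pos[of "word True x (pos x m)"] mu_pos by simp
    show ?thesis using Pp P0 wm by (intro mult_left_mono power_mono) auto
  qed
  also have "\<dots> = (real ?b * golden)^2 * mu ^ (?b * (if even (Suc m) then 2 else 1)) * Phi x m"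
    by (simp add: Phi_def power_mult_distrib)
  finally show ?thesis .
qed


lemma psi_decay:
  assumes x: "irr x" and per: "\<forall>i. cf_quot x (Suc i) = (if i mod (2*N+2) = 0 then B else 1)"
    and B1: "B \<ge> 1" and rho: "real B^2 * golden^(N+2) * mu^B < 1"
  shows "\<forall>\<epsilon>>0. \<exists>K. \<forall>k\<ge>K. Psi x k \<le> \<epsilon>"
proof -
  define P where "P = 2*N+2"
  define g where "g = golden"
  define \<rho> where "\<rho> = real B^2 * g^(N+2) * mu^B"
  define Cb where "Cb = (real B * g)^2"
  have g1: "g > 1" using golden_gt1 by (simp add: g_def)
  have gmu: "g * mu = 1" using mu_golden by (simp add: g_def mult.commute)
  have Cb1: "Cb \<ge> 1"
  proof -
    have "real B * g \<ge> 1 * 1" using B1 g1 by (intro mult_mono) auto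
    thus ?thesis unfolding Cb_def by (simp add: one_le_power)
  qed
  have r0: "\<rho> \<ge> 0" using mu_pos g1 by (simp add: \<rho>_def)
  have r1: "\<rho> < 1" using rho by (simp add: \<rho>_def g_def)
  have P2: "P \<ge> 2" "even P" by (auto simp: P_def)
  have perP: "cf_quot x (Suc i) = (if i mod P = 0 then B else 1)" for i using per by (simp add: P_def)
  note step = Phi_step[OF x]
  have fa: "Phi x (Suc m) \<le> Phi x m" if "m \<ge> 1" "m mod P \<noteq> 0" "even (Suc m)" for m
  proof -
    have "Phi x (Suc m) \<le> (1 * g)^2 * mu ^ 2 * Phi x m" using step[OF that(1)] perP[of m] that by (simp add: g_def)
    also have "(1 * g)^2 * mu^2 = 1" using gmu by (simp add: power_mult_distrib[symmetric])
    finally show ?thesis by simp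
  qed
  have fb: "Phi x (Suc m) \<le> g * Phi x m" if "m \<ge> 1" "m mod P \<noteq> 0" "odd (Suc m)" for m
  proof -
    have "Phi x (Suc m) \<le> (1 * g)^2 * mu * Phi x m" using step[OF that(1)] perP[of m] that by (simp add: g_def)
    also have "(1 * g)^2 * mu = g" using gmu by (simp add: power2_eq_square mult.assoc)
    finally show ?thesis by simp
  qed
  have fc: "Phi x (Suc m) \<le> Cb * mu^B * Phi x m" if "m \<ge> 1" "m mod P = 0" for m
  proof -
    have "odd (Suc m)" using that P2 by (metis dvd_imp_mod_0 even_Suc mod_mod_cancel mod_0_imp_dvd dvd_trans)
    thus ?thesis using step[OF that(1)] perP[of m] that by (simp add: g_def Cb_def)
  qed
  have fd: "Phi x (Suc m) \<le> Cb * Phi x m" if "m \<ge> 1" for m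
  proof -
    have ph: "Phi x m \<ge> 0" by (rule Phi_nn)
    have gCb: "g \<le> Cb"
    proof -
      have "g \<le> g * g" using g1 by simp
      also have "\<dots> \<le> (real B * g)^2" using B1 g1 by (simp add: power2_eq_square mult_mono)
      finally show ?thesis by (simp add: Cb_def)
    qed
    show ?thesis
    proof (cases "m mod P = 0")
      case True
      have "Cb * mu^B \<le> Cb" using mu_pos mu_lt1 Cb1 by (simp add: mult_le_cancel_left1 power_le_one)
      hence "Cb * mu^B * Phi x m \<le> Cb * Phi x m" using ph by (rule mult_right_mono)
      thus ?thesis using fc[OF that True] by linarith
    next
      case False
      show ?thesis
      proof (cases "even (Suc m)")
        case True
        have "1 * Phi x m \<le> Cb * Phi x m" using Cb1 ph by (rule mult_right_mono)
        thus ?thesis using fa[OF that False True] by linarith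
      next
        case F2: False
        have "g * Phi x m \<le> Cb * Phi x m" using gCb ph by (rule mult_right_mono)
        thus ?thesis using fb[OF that False F2] by linarith
      qed
    qed
  qed
  have modP: "(n * P + r) mod P = r" if "r < P" for n r
  proof -
    have "(n * P + r) mod P = r mod P" by (simp add: mod_mult_self3[of n P r, simplified mult.commute] add.commute)
    thus ?thesis using that by simp
  qed
  have two: "Phi x (n*P + 1 + 2*i) \<le> g^i * Phi x (n*P + 1)" if "i \<le> N" for n i
    using that
  proof (induction i)
    case 0 then show ?case by simp
  next
    case (Suc i)
    let ?m = "n*P + 1 + 2*i"
    have m1: "?m \<ge> 1" by simp
    have l1: "1 + 2*i < P" and l2: "2 + 2*i < P" using Suc.prems by (simp_all add: P_def)
    have mod1: "?m mod P = 1 + 2*i" using modP[OF l1, of n] by (simp add: add.assoc)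
    have mod2: "(Suc ?m) mod P = 2 + 2*i" using modP[OF l2, of n] by (simp add: add.assoc)
    have ev: "even (Suc ?m)" using P2 by simp
    have a: "Phi x (Suc ?m) \<le> Phi x ?m" using fa[OF m1 _ ev] mod1 by simp
    have b: "Phi x (Suc (Suc ?m)) \<le> g * Phi x (Suc ?m)" using fb[of "Suc ?m"] mod2 ev by simp
    have "Phi x (n*P + 1 + 2 * Suc i) = Phi x (Suc (Suc ?m))" by simp
    also have "\<dots> \<le> g * Phi x ?m"
    proof -
      have "g * Phi x (Suc ?m) \<le> g * Phi x ?m" using a g1 by (intro mult_left_mono) auto
      thus ?thesis using b by linarith
    qed
    also have "\<dots> \<le> g * (g^i * Phi x (n*P + 1))" using Suc g1 by (intro mult_left_mono) auto
    finally show ?case by (simp add: mult.assoc)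
  qed
  have period: "Phi x ((Suc n)*P + 1) \<le> \<rho> * Phi x (n*P + 1)" for n
  proof -
    let ?m = "n*P + 1 + 2*N"
    have t: "Phi x ?m \<le> g^N * Phi x (n*P + 1)" using two[of N n] by simp
    have l1: "1 + 2*N < P" by (simp add: P_def)
    have mod1: "?m mod P = 1 + 2*N" using modP[OF l1, of n] by (simp add: add.assoc)
    have ev: "even (Suc ?m)" using P2 by simp
    have a: "Phi x (Suc ?m) \<le> Phi x ?m" using fa[of ?m] mod1 ev by (simp add: P_def)
    have e: "Suc ?m = (Suc n) * P" by (simp add: P_def)
    have m0: "(Suc ?m) mod P = 0" unfolding e by simp
    have b: "Phi x (Suc (Suc ?m)) \<le> Cb * mu^B * Phi x (Suc ?m)" using fc[of "Suc ?m"] m0 by simp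
    have "Phi x ((Suc n)*P + 1) = Phi x (Suc (Suc ?m))" unfolding e by simp
    also have "\<dots> \<le> Cb * mu^B * (g^N * Phi x (n*P + 1))"
    proof -
      have c0: "Cb * mu^B \<ge> 0" using Cb1 mu_pos by simp
      have "Phi x (Suc ?m) \<le> g^N * Phi x (n*P + 1)" using a t by linarith
      hence "Cb * mu^B * Phi x (Suc ?m) \<le> Cb * mu^B * (g^N * Phi x (n*P + 1))" using c0 by (rule mult_left_mono)
      thus ?thesis using b by linarith
    qed
    also have "\<dots> = \<rho> * Phi x (n*P + 1)"
      by (simp add: \<rho>_def Cb_def power_mult_distrib power_add algebra_simps power2_eq_square)
    finally show ?thesis .
  qed
  have geo: "Phi x (n*P + 1) \<le> \<rho>^n * Phi x 1" for n
  proof (induction n)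
    case 0 then show ?case by simp
  next
    case (Suc n)
    have "Phi x (Suc n * P + 1) \<le> \<rho> * Phi x (n*P + 1)" by (rule period)
    also have "\<dots> \<le> \<rho> * (\<rho>^n * Phi x 1)" using Suc r0 by (intro mult_left_mono) auto
    finally show ?case by (simp add: mult.assoc)
  qed
  have inner: "Phi x (m + r) \<le> Cb^r * Phi x m" if "m \<ge> 1" for m r
  proof (induction r)
    case 0 then show ?case by simp
  next
    case (Suc r)
    have "Phi x (Suc (m + r)) \<le> Cb * Phi x (m + r)" using fd[of "m + r"] that by simp
    also have "\<dots> \<le> Cb * (Cb^r * Phi x m)" using Suc Cb1 by (intro mult_left_mono) auto
    finally show ?case by (simp add: mult.assoc)
  qed
  have allm: "Phi x m \<le> Cb^P * \<rho>^((m - 1) div P) * Phi x 1" if "m \<ge> 1" for m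
  proof -
    let ?n = "(m - 1) div P" and ?r = "(m - 1) mod P"
    have e: "m = (?n * P + 1) + ?r" using that by (simp add: mult.commute)
    have "Phi x m \<le> Cb^?r * Phi x (?n * P + 1)" using inner[of "?n * P + 1" ?r] e by simp
    also have "\<dots> \<le> Cb^P * Phi x (?n * P + 1)"
    proof -
      have "?r < P" using P2 by simp
      hence "Cb^?r \<le> Cb^P" using Cb1 by (intro power_increasing) auto
      thus ?thesis using Phi_nn by (intro mult_right_mono) auto
    qed
    also have "\<dots> \<le> Cb^P * (\<rho>^?n * Phi x 1)" using geo[of ?n] Cb1 by (intro mult_left_mono) auto
    finally show ?thesis by (simp add: mult.assoc)
  qed
  show ?thesis
  proof (intro allI impI)
    fix \<epsilon> :: real assume e: "\<epsilon> > 0"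
    define C where "C = Cb * Cb^P * (Phi x 1 + 1)"
    have C0: "C > 0" using Cb1 Phi_nn[of x 1] by (simp add: C_def)
    obtain n0 where n0: "\<rho>^n0 < \<epsilon> / C" using real_arch_pow_inv[of "\<epsilon> / C" \<rho>] e C0 r1 by auto
    show "\<exists>K. \<forall>k\<ge>K. Psi x k \<le> \<epsilon>"
    proof (intro exI[of _ "pos x (n0 * P + 1)"] allI impI)
      fix k assume k: "pos x (n0 * P + 1) \<le> k"
      obtain m' where m': "m' \<ge> 1" "pos x (m' - 1) \<le> k" "k < pos x m'" using blk_exists[OF x] by blast
      define m where "m = m' - 1"
      have mm: "m' > n0 * P + 1"
      proof (rule ccontr)
        assume "\<not> m' > n0 * P + 1"
        hence "pos x m' \<le> pos x (n0 * P + 1)" using pos_mono[OF x] by simp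
        thus False using k m' by simp
      qed
      hence m1: "m \<ge> 1" "m \<ge> n0 * P + 1" by (auto simp: m_def)
      have ps: "pos x (Suc m) = pos x m + cf_quot x (Suc m)" using pos_Suc[OF x m1(1)] .
      define j where "j = k - pos x m"
      have kj: "k = pos x m + j" "j \<le> cf_quot x (Suc m)"
        using m' ps m1 by (auto simp: j_def m_def)
      have bB: "real (cf_quot x (Suc m)) \<le> real B" using perP[of m] B1 by simp
      have "Psi x k \<le> Phi x m * (real (cf_quot x (Suc m)) * golden)^2" using Psi_block[OF x m1(1) kj(2)] kj(1) by simp
      also have "\<dots> \<le> Phi x m * Cb"
        unfolding Cb_def g_def using bB golden_gt1 Phi_nn[of x m]
        by (intro mult_left_mono power_mono mult_right_mono) auto
      also have "\<dots> \<le> (Cb^P * \<rho>^((m - 1) div P) * Phi x 1) * Cb"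
        using allm[OF m1(1)] Cb1 by (intro mult_right_mono) auto
      also have "\<dots> \<le> (Cb^P * \<rho>^n0 * (Phi x 1 + 1)) * Cb"
      proof -
        have "n0 * P \<le> m - 1" using m1(2) by simp
        hence "n0 * P div P \<le> (m - 1) div P" by (rule div_le_mono)
        hence "n0 \<le> (m - 1) div P" using P2 by simp
        hence "\<rho>^((m - 1) div P) \<le> \<rho>^n0" using r0 r1 by (intro power_decreasing) auto
        thus ?thesis using Cb1 r0 Phi_nn[of x 1]
          by (intro mult_right_mono mult_mono mult_left_mono) auto
      qed
      also have "\<dots> = C * \<rho>^n0" by (simp add: C_def algebra_simps)
      also have "\<dots> \<le> C * (\<epsilon> / C)" using n0 C0 by (intro mult_left_mono) auto
      also have "\<dots> = \<epsilon>" using C0 by simp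
      finally show "Psi x k \<le> \<epsilon>" .
    qed
  qed
qed


lemma deriv_zero:
  assumes x: "irr x" and dec: "\<forall>\<epsilon>>0. \<exists>K. \<forall>k\<ge>K. Psi x k \<le> \<epsilon>"
  shows "(DTU (1 / golden) has_real_derivative 0) (at x)"
  unfolding DTU_eq DERIV_def LIM_eq
proof (intro allI impI)
  fix r :: real assume r: "r > 0"
  obtain K where K: "\<forall>k\<ge>K. Psi x k \<le> r / 16" using dec r by (meson divide_pos_pos zero_less_numeral)
  define d where "d = min (rgt (chn True x K) - x) (x - lft (chn True x K))"
  have d0: "d > 0" using chn_strict[OF x, of K] by (simp add: d_def)
  have good: "\<bar>q\<bar> < r" if "K \<le> k" and q: "0 \<le> q" "q \<le> 8 * max (Psi x k) (Psi x (nxt x k))"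
    and blk: "m \<ge> 1" "pos x (m - 1) \<le> k" "k < pos x m" for k q m
  proof -
    have "k < nxt x k" using nxt_props[OF x blk] by simp
    hence "Psi x (nxt x k) \<le> r / 16" "Psi x k \<le> r / 16" using K that by auto
    hence "q \<le> 8 * (r / 16)" using q by linarith
    thus ?thesis using q r by simp
  qed
  show "\<exists>s>0. \<forall>h. h \<noteq> 0 \<and> norm (h - 0) < s \<longrightarrow> norm ((Gx (x + h) - Gx x) / h - 0) < r"
  proof (intro exI[of _ d] conjI allI impI)
    show "d > 0" by (rule d0)
    fix h :: real assume hh: "h \<noteq> 0 \<and> norm (h - 0) < d"
    obtain n where n: "n \<noteq> 0" "inverse (real n) < \<bar>h\<bar>" using real_arch_inverse[of "\<bar>h\<bar>"] hh by auto
    have lenJ: "rgt (chn True x n) - lft (chn True x n) < \<bar>h\<bar>"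
    proof -
      have "rgt (chn True x n) - lft (chn True x n) \<le> 1 / (real n + 1)"
        using node_len_bound[of "word True x n"] by (simp add: chn_word)
      also have "\<dots> \<le> inverse (real n)" using n by (simp add: field_simps)
      finally show ?thesis using n by linarith
    qed
    have sn: "lft (chn True x n) < x" "x < rgt (chn True x n)" using chn_strict[OF x] by auto
    let ?J = "max n K"
    have subJ: "lft (chn True x n) \<le> lft (chn True x ?J) \<and> rgt (chn True x ?J) \<le> rgt (chn True x n)"
      by (rule chn_sub) simp
    have KJ: "K \<le> ?J" by simp
    have x01: "0 \<le> x" "x \<le> 1" using x by (auto simp: irr_def)
    show "norm ((Gx (x + h) - Gx x) / h - 0) < r"
    proof (cases "h > 0")
      case True
      let ?P = "\<lambda>j. x + h \<le> rgt (chn True x j)"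
      have PK: "?P K" using hh True by (simp add: d_def dist_real_def)
      have nPJ: "\<not> ?P ?J" using lenJ subJ sn True by auto
      obtain k where k: "K \<le> k" "k < ?J" "?P k" "\<not> ?P (Suc k)"
        using ivt_nat[of ?P K ?J, OF PK nPJ KJ] by blast
      obtain m where blk: "m \<ge> 1" "pos x (m - 1) \<le> k" "k < pos x m" using blk_exists[OF x] by blast
      have xh: "0 \<le> x + h" "x + h \<le> 1" using x01 True k(3) chn_01[of True x k] by auto
      show ?thesis using good[OF k(1) quot_nonneg[OF x hh[THEN conjunct1] xh] upper_pos[OF x True k(3) k(4) blk] blk] by simp
    next
      case False
      hence hn: "h < 0" using hh by simp
      let ?P = "\<lambda>j. lft (chn True x j) \<le> x + h"
      have PK: "?P K" using hh hn by (simp add: d_def dist_real_def)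
      have nPJ: "\<not> ?P ?J" using lenJ subJ sn hn by auto
      obtain k where k: "K \<le> k" "k < ?J" "?P k" "\<not> ?P (Suc k)"
        using ivt_nat[of ?P K ?J, OF PK nPJ KJ] by blast
      obtain m where blk: "m \<ge> 1" "pos x (m - 1) \<le> k" "k < pos x m" using blk_exists[OF x] by blast
      have xh: "0 \<le> x + h" "x + h \<le> 1" using x01 hn k(3) chn_01[of True x k] by auto
      show ?thesis using good[OF k(1) quot_nonneg[OF x hh[THEN conjunct1] xh] upper_neg[OF x hn k(3) k(4) blk] blk] by simp
    qed
  qed
qed

lemma sum_add_lt:
  fixes n m :: nat and f :: "nat \<Rightarrow> real"
  shows "(\<Sum>k<n + m. f k) = (\<Sum>k<n. f k) + (\<Sum>k<m. f (n + k))"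
  by (induction m) (auto simp: add.assoc)

lemma S_limit:
  assumes per: "\<forall>i. cf_quot y (Suc i) = (if i mod (2*N+2) = 0 then B else 1)"
  shows "(\<lambda>t. S_phi (2*t) y / real t) \<longlonglongrightarrow> (real B + 3 * real N + 2) / (real N + 1)"
proof -
  define P where "P = 2*N+2"
  define c where "c i = (if even i then 2 else (1::real))" for i :: nat
  define f where "f i = real (cf_quot y i) * c i" for i
  define S' where "S' n = (\<Sum>k<n. f (Suc k))" for n
  have perP: "cf_quot y (Suc i) = (if i mod P = 0 then B else 1)" for i using per by (simp add: P_def)
  have SS: "S_phi n y = S' n" for n
  proof (induction n)
    case 0 then show ?case by (simp add: S_phi_def S'_def)
  next
    case (Suc n) then show ?case by (simp add: S_phi_Suc S'_def f_def c_def)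
  qed
  have fper: "f (Suc (k + P)) = f (Suc k)" for k
  proof -
    have "(k + P) mod P = k mod P" by simp
    moreover have "even (Suc (k + P)) = even (Suc k)" by (simp add: P_def)
    ultimately show ?thesis by (simp add: f_def c_def perP)
  qed
  define W0 where "W0 = (\<Sum>k<P. f (Suc k))"
  have win: "(\<Sum>k<P. f (Suc (n + k))) = W0" for n
  proof (induction n)
    case 0 then show ?case by (simp add: W0_def)
  next
    case (Suc n)
    have "(\<Sum>k<Suc P. f (Suc (n + k))) = f (Suc n) + (\<Sum>k<P. f (Suc (n + Suc k)))"
      using sum.lessThan_Suc_shift[of "\<lambda>k. f (Suc (n + k))" P] by simp
    moreover have "(\<Sum>k<Suc P. f (Suc (n + k))) = (\<Sum>k<P. f (Suc (n + k))) + f (Suc (n + P))"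
      by simp
    moreover have "f (Suc (n + P)) = f (Suc n)" using fper[of n] by simp
    ultimately have "(\<Sum>k<P. f (Suc (n + Suc k))) = (\<Sum>k<P. f (Suc (n + k)))" by linarith
    thus ?case using Suc by simp
  qed
  have Sshift: "S' (n + P) = S' n + W0" for n
    using sum_add_lt[of "\<lambda>k. f (Suc k)" n P] win[of n] by (simp add: S'_def)
  have csum: "(\<Sum>k<2*M. c (Suc k)) = 3 * real M" for M
    by (induction M) (auto simp: c_def)
  have f_other: "f (Suc (Suc k)) = c (Suc (Suc k))" if "k < 2*N+1" for k
  proof -
    have "Suc k mod P \<noteq> 0" using that by (simp add: P_def)
    thus ?thesis by (simp add: f_def perP)
  qed
  have "W0 = f 1 + (\<Sum>k<2*N+1. f (Suc (Suc k)))"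
    unfolding W0_def P_def using sum.lessThan_Suc_shift[of "\<lambda>k. f (Suc k)" "2*N+1"] by simp
  also have "(\<Sum>k<2*N+1. f (Suc (Suc k))) = (\<Sum>k<2*N+1. c (Suc (Suc k)))"
    using f_other by (intro sum.cong) auto
  also have "(\<Sum>k<2*N+1. c (Suc (Suc k))) = 3 * real (N + 1) - 1"
  proof -
    have "(\<Sum>k<Suc (2*N+1). c (Suc k)) = c 1 + (\<Sum>k<2*N+1. c (Suc (Suc k)))"
      using sum.lessThan_Suc_shift[of "\<lambda>k. c (Suc k)" "2*N+1"] by simp
    moreover have "(\<Sum>k<Suc (2*N+1). c (Suc k)) = 3 * real (N + 1)" using csum[of "N+1"] by simp
    ultimately show ?thesis by (simp add: c_def)
  qed
  also have "f 1 = real B" using perP[of 0] by (simp add: f_def c_def)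
  finally have W0v: "W0 = real B + 3 * real N + 2" by simp
  define Lr where "Lr = W0 / (real N + 1)"
  define gp where "gp t = S' (2*t) - Lr * real t" for t
  have gper: "gp (t + (N+1)) = gp t" for t
  proof -
    have e: "2 * (t + (N+1)) = 2*t + P" by (simp add: P_def)
    have "S' (2 * (t + (N+1))) = S' (2*t) + W0" unfolding e by (rule Sshift)
    moreover have "Lr * real (t + (N+1)) = Lr * real t + W0" by (simp add: Lr_def field_simps)
    ultimately show ?thesis by (simp add: gp_def)
  qed
  have gmod: "gp t = gp (t mod (N+1))" for t
  proof -
    have "gp (r + q * (N+1)) = gp r" for r q
    proof (induction q)
      case 0 then show ?case by simp
    next
      case (Suc q)
      have "r + Suc q * (N+1) = (r + q * (N+1)) + (N+1)" by simp
      hence "gp (r + Suc q * (N+1)) = gp (r + q * (N+1))" using gper[of "r + q * (N+1)"] by metis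
      thus ?case using Suc by simp
    qed
    hence "gp (t mod (N+1) + (t div (N+1)) * (N+1)) = gp (t mod (N+1))" by blast
    moreover have "t mod (N+1) + (t div (N+1)) * (N+1) = t" by (rule mod_div_mult_eq)
    ultimately show ?thesis by simp
  qed
  define Kb where "Kb = (\<Sum>r<N+1. \<bar>gp r\<bar>)"
  have gb: "\<bar>gp t\<bar> \<le> Kb" for t
  proof -
    have "t mod (N+1) \<in> {..<N+1}" by simp
    hence "\<bar>gp (t mod (N+1))\<bar> \<le> Kb" unfolding Kb_def by (intro member_le_sum) auto
    thus ?thesis using gmod by simp
  qed
  have l0: "(\<lambda>t. gp t / real t) \<longlonglongrightarrow> 0"
  proof (rule real_tendsto_sandwich[of "\<lambda>t. - (Kb / real t)" _ _ "\<lambda>t. Kb / real t"])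
    show "\<forall>\<^sub>F t in sequentially. - (Kb / real t) \<le> gp t / real t"
    proof (intro always_eventually allI)
      fix t
      have "-Kb \<le> gp t" using gb[of t] by simp
      hence "(-Kb) / real t \<le> gp t / real t" by (rule divide_right_mono) simp
      thus "- (Kb / real t) \<le> gp t / real t" by simp
    qed
    show "\<forall>\<^sub>F t in sequentially. gp t / real t \<le> Kb / real t"
    proof (intro always_eventually allI)
      fix t
      have "gp t \<le> Kb" using gb[of t] by simp
      thus "gp t / real t \<le> Kb / real t" by (rule divide_right_mono) simp
    qed
    show "(\<lambda>t. - (Kb / real t)) \<longlonglongrightarrow> 0" using tendsto_minus[OF lim_const_over_n[of Kb]] by simp
    show "(\<lambda>t. Kb / real t) \<longlonglongrightarrow> 0" by (rule lim_const_over_n)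
  qed
  have "(\<lambda>t. Lr + gp t / real t) \<longlonglongrightarrow> Lr + 0" by (intro tendsto_intros l0)
  moreover have "\<forall>\<^sub>F t in sequentially. Lr + gp t / real t = S_phi (2*t) y / real t"
    unfolding eventually_sequentially
    by (intro exI[of _ 1] allI impI) (simp add: gp_def SS field_simps)
  ultimately have "(\<lambda>t. S_phi (2*t) y / real t) \<longlonglongrightarrow> Lr" using tendsto_cong by force
  thus ?thesis using W0v by (simp add: Lr_def)
qed


lemma exp_beats:
  assumes "j \<ge> 50" shows "16 * real j ^ 4 < (3/2::real) ^ j"
  using assms
proof (induction j rule: dec_induct)
  case base then show ?case by (simp add: power_divide less_divide_eq)
next
  case (step j)
  have j10: "real j \<ge> 10" using step by simp
  have a: "real j + 1 \<le> 11/10 * real j" using j10 by simp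
  have "(real j + 1)^4 \<le> (11/10 * real j)^4" using a by (intro power_mono) auto
  also have "\<dots> = (11/10)^4 * real j ^ 4" by (rule power_mult_distrib)
  also have "\<dots> \<le> 3/2 * real j ^ 4" by (intro mult_right_mono) (simp_all add: power_divide)
  finally have "16 * (real j + 1)^4 \<le> 3/2 * (16 * real j ^ 4)" by simp
  also have "\<dots> < 3/2 * (3/2) ^ j" using step by simp
  finally show ?case by (simp add: add.commute)
qed

theorem part_ii:
  assumes d: "\<delta> > 0"
  shows "\<exists>y::real. y \<in> {0<..<1} \<and> y \<notin> \<rat> \<and>
              (\<exists>L. (\<lambda>t. S_phi (2 * t) y / real t) \<longlonglongrightarrow> L \<and> L < 4 + \<delta>) \<and>
              (DTU (1 / golden) has_real_derivative 0) (at y)"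
proof -
  define j where "j = max 50 (nat \<lceil>1 / \<delta>\<rceil> + 1)"
  have j50: "j \<ge> 50" by (simp add: j_def)
  have jd: "\<delta> * real j \<ge> 1"
  proof -
    have "real j \<ge> 1 / \<delta>" unfolding j_def by linarith
    thus ?thesis using d by (simp add: field_simps)
  qed
  define N where "N = j^2"
  define B where "B = j^2 + j + 2"
  define cs where "cs = replicate (2*N+1) (1::nat)"
  define Lb where "Lb = B # cs"
  have B2: "B \<ge> 2" by (simp add: B_def)
  have csall: "\<forall>c\<in>set cs. c \<ge> 1" by (simp add: cs_def)
  obtain y where y: "0 < y" "y < 1" "phiC Lb y = y" using fixpt[OF csall B2] by (auto simp: Lb_def)
  have all: "\<forall>c\<in>set Lb. c \<ge> 1" using csall B2 by (simp add: Lb_def)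
  have Lne: "Lb \<noteq> []" by (simp add: Lb_def)
  have yq: "y \<notin> \<rat>" by (rule periodic_irr[OF all y Lne])
  have iy: "irr y" using y yq by (simp add: irr_def)
  have lenL: "length Lb = 2*N+2" by (simp add: Lb_def cs_def)
  have per: "\<forall>i. cf_quot y (Suc i) = (if i mod (2*N+2) = 0 then B else 1)"
  proof
    fix i
    have nth: "Lb ! r = (if r = 0 then B else 1)" if "r < 2*N+2" for r
    proof (cases r)
      case 0 then show ?thesis by (simp add: Lb_def)
    next
      case (Suc r')
      hence "r' < 2*N+1" using that by simp
      thus ?thesis using Suc by (simp add: Lb_def cs_def del: replicate.simps)
    qed
    have "cf_quot y (Suc i) = Lb ! (i mod (2*N+2))" using cfq_period[OF all y Lne, of i] lenL by simp
    moreover have "i mod (2*N+2) < 2*N+2" by simp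
    ultimately show "cf_quot y (Suc i) = (if i mod (2*N+2) = 0 then B else 1)"
      using nth by simp
  qed
  have g0: "golden > 0" using golden_gt1 by simp
  have Bj: "B = (N + 2) + j" by (simp add: B_def N_def)
  have gmu1: "golden * mu = 1" using mu_golden by (simp add: mult.commute)
  have gm: "golden^(N+2) * mu^(N+2) = 1"
    unfolding power_mult_distrib[symmetric] gmu1 by simp
  have "real B^2 * golden^(N+2) * mu^B = real B^2 * mu^j * (golden^(N+2) * mu^(N+2))"
    unfolding Bj by (simp add: power_add algebra_simps)
  also have "\<dots> = real B^2 * mu^j" using gm by simp
  finally have rhoe: "real B^2 * golden^(N+2) * mu^B = real B^2 * mu^j" .
  have Bb: "real B \<le> 4 * real j^2"
  proof -
    have j1: "real j \<ge> 1" using j50 by simp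
    have "real j * 1 \<le> real j * real j" using j1 by (intro mult_left_mono) auto
    hence "real j \<le> real j^2" by (simp add: power2_eq_square)
    hence "real j + 2 \<le> 3 * real j^2" using j1 by linarith
    thus ?thesis by (simp add: B_def)
  qed
  have "real B^2 \<le> (4 * real j^2)^2" using Bb by (intro power_mono) auto
  also have "\<dots> = 16 * real j^4" by (simp add: power_mult_distrib power_mult[symmetric])
  also have "\<dots> < (3/2)^j" by (rule exp_beats[OF j50])
  also have "\<dots> \<le> golden^j" using golden_ge by (intro power_mono) auto
  finally have Bg: "real B^2 < golden^j" .
  have "real B^2 * mu^j < golden^j * mu^j" using Bg mu_pos by simp
  also have "golden^j * mu^j = 1" unfolding power_mult_distrib[symmetric] gmu1 by simp
  finally have r0: "real B^2 * mu^j < 1" .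
  have rho: "real B^2 * golden^(N+2) * mu^B < 1" unfolding rhoe by (rule r0)
  have B1: "B \<ge> 1" using B2 by simp
  have der: "(DTU (1 / golden) has_real_derivative 0) (at y)"
    by (rule deriv_zero[OF iy psi_decay[OF iy per B1 rho]])
  have lim: "(\<lambda>t. S_phi (2*t) y / real t) \<longlonglongrightarrow> (real B + 3 * real N + 2) / (real N + 1)"
    by (rule S_limit[OF per])
  have Lb4: "(real B + 3 * real N + 2) / (real N + 1) < 4 + \<delta>"
  proof -
    have jpos: "real j > 0" using j50 by simp
    have "real j \<le> \<delta> * real j * real j" using jd jpos by (simp add: mult_le_cancel_right1)
    hence "real j < \<delta> * (real j^2 + 1)" using d by (simp add: power2_eq_square algebra_simps)
    hence "real B + 3 * real N + 2 < (4 + \<delta>) * (real N + 1)"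
      by (simp add: B_def N_def algebra_simps)
    thus ?thesis by (simp add: divide_less_eq add_pos_nonneg)
  qed
  show ?thesis using y yq der lim Lb4 by (intro exI[of _ y]) auto
qed

theorem theorem1:
  shows "(\<forall>x::real. x \<in> {0<..<1} \<and> x \<notin> \<rat> \<and>
            limsup (\<lambda>t. ereal (S_phi (2 * t) x / real t)) < 4 \<longrightarrow>
            filterlim (\<lambda>h. (DTU (1 / golden) (x + h) - DTU (1 / golden) x) / h) at_top (at 0))
       \<and> (\<forall>\<delta>::real. \<delta> > 0 \<longrightarrow>
            (\<exists>y::real. y \<in> {0<..<1} \<and> y \<notin> \<rat> \<and>
              (\<exists>L. (\<lambda>t. S_phi (2 * t) y / real t) \<longlonglongrightarrow> L \<and> L < 4 + \<delta>) \<and>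
              (DTU (1 / golden) has_real_derivative 0) (at y)))"
proof (intro conjI allI impI)
  fix x :: real
  assume a: "x \<in> {0<..<1} \<and> x \<notin> \<rat> \<and> limsup (\<lambda>t. ereal (S_phi (2 * t) x / real t)) < 4"
  hence "irr x" by (simp add: irr_def)
  thus "filterlim (\<lambda>h. (DTU (1 / golden) (x + h) - DTU (1 / golden) x) / h) at_top (at 0)"
    using part_i a by blast
next
  fix \<delta> :: real assume "\<delta> > 0"
  thus "\<exists>y::real. y \<in> {0<..<1} \<and> y \<notin> \<rat> \<and>
              (\<exists>L. (\<lambda>t. S_phi (2 * t) y / real t) \<longlonglongrightarrow> L \<and> L < 4 + \<delta>) \<and>
              (DTU (1 / golden) has_real_derivative 0) (at y)" by (rule part_ii)
qed


end
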